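(* In the setting of the context, suppose that $\mu_0$ has finite total mass density, i.e. $\sum_{n\ge1}x_n2^{-n}<\infty$. Let $(\mu^+_t)_{t\ge0}$ be a solution of Smoluchowski's equation with kernel $K$ starting from $\mu_0$, supported on $I$, such that $\mu^+_t(\{x:n(x)=n\})=m^+_n(t)$ for all $n\ge1$, $t\ge0$. Then $(\mu^+_t)$ is conservative: $\int_Ex\,\mu^+_t(dx)=\int_Ex\,\mu_0(dx)$ for all $t\ge0$.
   Context: $E=(0,\infty)$; $\lambda_n=8^n$. Let $x_1<x_2<\cdots$ be increasing in $(0,\infty)$ and linearly independent over $\mathbb Z$. $I$ is the set of $x\in E$ of the form $x=x_n+k_1x_1+\dots+k_{n-1}x_{n-1}$, $n\ge1$, $k_i\in\mathbb Z$; for such $x$, $n(x)=n$; $n(x)=0$ for $x\notin I$. $K(x,y)=8^n$ if $\{n(x),n(y)\}=\{n,n+1\}$ for some $n\ge1$, and $0$ otherwise. $\mu_0=\sum_{n\ge1}2^{-n}\varepsilon_{x_n}$. For $M\ge1$, $m^M$ is the solution of $\frac{d}{dt}m_n=-\lambda_nm_nm_{n+1}$ ($n\ge1$) with $m^M_n(0)=2^{-n}$ for $n\le M$ and $0$ for $n>M$; $m^+_n(t)=\lim_{N\to\infty}m^{2N}_n(t)$ (this limit exists and solves the same system with $m^+_n(0)=2^{-n}$). A solution of Smoluchowski's equation starting from $\mu_0$ is a map $t\mapsto\mu_t$ into non-negative Radon measures on $E$ with: $\int x1_{x\le1}d\mu_0<\infty$; $t\mapsto\mu_t(B)$ measurable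 for compact $B$; $\int_0^t\int_{B\times E}Kd\mu_sd\mu_s ds<\infty$; and for all $t$, for bounded measurable $f$ of compact support and for $f(x)=x1_{x\le1}$, $\langle f,\mu_t\rangle=\langle f,\mu_0\rangle+\frac12\int_0^t\int\{f(x+y)-f(x)-f(y)\}K(x,y)\mu_s(dx)\mu_s(dy)ds$. *)

theory Defs
  imports "HOL-Analysis.Analysis" "HOL-Probability.Probability"
begin

(* The sequence x_1 < x_2 < ... is modelled as x :: nat => real; the value x 0 is
   irrelevant (all conditions only concern indices n >= 1). E = (0,oo) = {0<..}. *)

definition admissible_seq :: "(nat \<Rightarrow> real) \<Rightarrow> bool" where
  "admissible_seq x \<longleftrightarrow>
     0 < x 1 \<and> (\<forall>n\<ge>1. x n < x (Suc n)) \<and>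
     (\<forall>(N::nat) (k::nat \<Rightarrow> int).
        (\<Sum>i=1..N. of_int (k i) * x i) = 0 \<longrightarrow> (\<forall>i\<in>{1..N}. k i = 0))"

definition in_level :: "(nat \<Rightarrow> real) \<Rightarrow> real \<Rightarrow> nat \<Rightarrow> bool" where
  "in_level x v n \<longleftrightarrow> n \<ge> 1 \<and> (\<exists>k::nat \<Rightarrow> int. v = x n + (\<Sum>i=1..<n. of_int (k i) * x i))"

definition Iset :: "(nat \<Rightarrow> real) \<Rightarrow> real set" where
  "Iset x = {v. 0 < v \<and> (\<exists>n. in_level x v n)}"

definition nI :: "(nat \<Rightarrow> real) \<Rightarrow> real \<Rightarrow> nat" where
  "nI x v = (if v \<in> Iset x then (THE n. in_level x v n) else 0)"

definition Kern :: "(nat \<Rightarrow> real) \<Rightarrow> real \<Rightarrow> real \<Rightarrow> real" where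
  "Kern x u v =
     (if \<exists>n\<ge>1. {nI x u, nI x v} = {n, Suc n}
      then 8 ^ (SOME n. n \<ge> 1 \<and> {nI x u, nI x v} = {n, Suc n}) else 0)"

(* mu_0 = sum_{n>=1} 2^{-n} delta_{x_n}, as image of a weighted counting measure on nat *)
definition mu0 :: "(nat \<Rightarrow> real) \<Rightarrow> real measure" where
  "mu0 x = distr (density (count_space UNIV)
                    (\<lambda>n::nat. if n \<ge> 1 then ennreal ((1/2) ^ n) else 0)) borel x"

definition ode_sol :: "(nat \<Rightarrow> real \<Rightarrow> real) \<Rightarrow> bool" where
  "ode_sol m \<longleftrightarrow> (\<forall>n\<ge>1. \<forall>t\<ge>0.
      (m n has_real_derivative (- (8 ^ n) * m n t * m (Suc n) t)) (at t within {0..}))"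

definition test_fns :: "(real \<Rightarrow> real) set" where
  "test_fns = {f. f \<in> borel_measurable borel \<and> bounded (range f) \<and>
                  (\<exists>B. compact B \<and> B \<subseteq> {0<..} \<and> (\<forall>v. v \<notin> B \<longrightarrow> f v = 0))}
              \<union> {(\<lambda>v. v * indicator {..1} v)}"

definition coag_term :: "(nat \<Rightarrow> real) \<Rightarrow> real measure \<Rightarrow> (real \<Rightarrow> real) \<Rightarrow> real \<times> real \<Rightarrow> real" where
  "coag_term x M f = (\<lambda>(u,v). (f (u + v) - f u - f v) * Kern x u v)"

(* Radon measures on E are modelled as Borel measures on the reals giving no mass
   to (-oo,0] and finite mass to compact subsets of (0,oo). *)
definition smol_solution :: "(nat \<Rightarrow> real) \<Rightarrow> (real \<Rightarrow> real measure) \<Rightarrow> bool" where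
  "smol_solution x mu \<longleftrightarrow>
     (\<forall>t\<ge>0. sets (mu t) = sets borel \<and> emeasure (mu t) {..0} = 0 \<and>
             (\<forall>B. compact B \<and> B \<subseteq> {0<..} \<longrightarrow> emeasure (mu t) B < \<infinity>)) \<and>
     (\<integral>\<^sup>+ v. ennreal (v * indicator {..1} v) \<partial>mu0 x) < \<infinity> \<and>
     (\<forall>B. compact B \<and> B \<subseteq> {0<..} \<longrightarrow>
          (\<lambda>t. emeasure (mu t) B) \<in> borel_measurable (restrict_space borel {0..})) \<and>
     (\<forall>B t. compact B \<and> B \<subseteq> {0<..} \<and> 0 \<le> t \<longrightarrow>
          (\<integral>\<^sup>+ s. indicator {0..t} s *
              (\<integral>\<^sup>+ p. indicator B (fst p) * ennreal (Kern x (fst p) (snd p)) \<partial>(mu s \<Otimes>\<^sub>M mu s))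
            \<partial>lborel) < \<infinity>) \<and>
     (\<forall>t\<ge>0. \<forall>f\<in>test_fns.
          integrable (mu t) f \<and>
          (AE s in lborel. s \<in> {0..t} \<longrightarrow> integrable (mu s \<Otimes>\<^sub>M mu s) (coag_term x (mu s) f)) \<and>
          set_integrable lborel {0..t} (\<lambda>s. \<integral>p. coag_term x (mu s) f p \<partial>(mu s \<Otimes>\<^sub>M mu s)) \<and>
          (\<integral>v. f v \<partial>mu t) = (\<integral>v. f v \<partial>mu0 x) +
             1/2 * (LINT s:{0..t}|lborel. (\<integral>p. coag_term x (mu s) f p \<partial>(mu s \<Otimes>\<^sub>M mu s))))"

end

theory Submission
  imports Defs
begin


lemma adm_pos: assumes "admissible_seq x" "n \<ge> 1" shows "x n > 0"
  using assms(2)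
proof (induction n)
  case 0 then show ?case by simp
next
  case (Suc n)
  show ?case
  proof (cases "n = 0")
    case True then show ?thesis using assms(1) by (simp add: admissible_seq_def)
  next
    case False
    then have "x n > 0" using Suc by simp
    moreover have "x n < x (Suc n)" using assms(1) False by (simp add: admissible_seq_def)
    ultimately show ?thesis by simp
  qed
qed

lemma level_unique_aux:
  assumes adm: "admissible_seq x" and lt: "n < m" and n1: "1 \<le> n"
    and eq: "x n + (\<Sum>i=1..<n. of_int (k i) * x i) = x m + (\<Sum>i=1..<m. of_int (k' i) * x i)"
  shows False
proof -
  define c where "c i = (if i = n then 1 else 0) + (if i < n then k i else 0)
      - (if i = m then 1 else 0) - (if i < m then k' i else 0)" for i
  have s1: "(\<Sum>i=1..m. of_int (if i = n then 1 else 0) * x i) = x n"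
  proof -
    have "(\<Sum>i=1..m. of_int (if i = n then 1 else 0) * x i) = (\<Sum>i=1..m. if i = n then x i else 0)"
      by (rule sum.cong) auto
    then show ?thesis using lt n1 by (simp add: sum.delta)
  qed
  have s2: "(\<Sum>i=1..m. of_int (if i < n then k i else 0) * x i) = (\<Sum>i=1..<n. of_int (k i) * x i)"
  proof -
    have "(\<Sum>i=1..m. of_int (if i < n then k i else 0) * x i) = (\<Sum>i\<in>{1..<n}. of_int (k i) * x i)"
      using lt by (intro sum.mono_neutral_cong_right) auto
    then show ?thesis by simp
  qed
  have s3: "(\<Sum>i=1..m. of_int (if i = m then 1 else 0) * x i) = x m"
  proof -
    have "(\<Sum>i=1..m. of_int (if i = m then 1 else 0) * x i) = (\<Sum>i=1..m. if i = m then x i else 0)"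
      by (rule sum.cong) auto
    then show ?thesis using lt n1 by (simp add: sum.delta)
  qed
  have s4: "(\<Sum>i=1..m. of_int (if i < m then k' i else 0) * x i) = (\<Sum>i=1..<m. of_int (k' i) * x i)"
  proof -
    have "(\<Sum>i=1..m. of_int (if i < m then k' i else 0) * x i) = (\<Sum>i\<in>{1..<m}. of_int (k' i) * x i)"
      by (intro sum.mono_neutral_cong_right) auto
    then show ?thesis by simp
  qed
  have "(\<Sum>i=1..m. of_int (c i) * x i) =
     (\<Sum>i=1..m. of_int (if i = n then 1 else 0) * x i) + (\<Sum>i=1..m. of_int (if i < n then k i else 0) * x i)
     - (\<Sum>i=1..m. of_int (if i = m then 1 else 0) * x i) - (\<Sum>i=1..m. of_int (if i < m then k' i else 0) * x i)"
    unfolding c_def by (simp add: algebra_simps sum.distrib sum_subtractf)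
  also have "\<dots> = 0" using s1 s2 s3 s4 eq by simp
  finally have "(\<Sum>i=1..m. of_int (c i) * x i) = 0" .
  then have "\<forall>i\<in>{1..m}. c i = 0" using adm unfolding admissible_seq_def by blast
  moreover have "c m = -1" using lt unfolding c_def by simp
  moreover have "m \<in> {1..m}" using lt n1 by simp
  ultimately show False by force
qed

lemma level_unique:
  assumes adm: "admissible_seq x" and "in_level x v n" "in_level x v m" shows "n = m"
proof (rule ccontr)
  assume ne: "n \<noteq> m"
  obtain k where k: "v = x n + (\<Sum>i=1..<n. of_int (k i) * x i)" "n \<ge> 1" using assms(2) by (auto simp: in_level_def)
  obtain k' where k': "v = x m + (\<Sum>i=1..<m. of_int (k' i) * x i)" "m \<ge> 1" using assms(3) by (auto simp: in_level_def)
  show False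
  proof (cases "n < m")
    case True
    have "x n + (\<Sum>i=1..<n. of_int (k i) * x i) = x m + (\<Sum>i=1..<m. of_int (k' i) * x i)"
      using k(1) k'(1) by simp
    then show False using level_unique_aux[OF adm True k(2)] by blast
  next
    case False then have "m < n" using ne by simp
    have "x m + (\<Sum>i=1..<m. of_int (k' i) * x i) = x n + (\<Sum>i=1..<n. of_int (k i) * x i)"
      using k(1) k'(1) by simp
    then show False using level_unique_aux[OF adm \<open>m < n\<close> k'(2)] by blast
  qed
qed

lemma nI_eq: assumes adm: "admissible_seq x" and "v > 0" "in_level x v n" shows "nI x v = n"
proof -
  have "v \<in> Iset x" using assms unfolding Iset_def by auto
  then have "nI x v = (THE n. in_level x v n)" by (simp add: nI_def)
  also have "\<dots> = n" using assms level_unique[OF adm] by (intro the_equality) auto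
  finally show ?thesis .
qed

lemma nI_pos: assumes adm: "admissible_seq x" and "nI x v \<ge> 1"
  shows "v > 0" "in_level x v (nI x v)"
proof -
  have vI: "v \<in> Iset x" using assms(2) by (auto simp: nI_def split: if_splits)
  then show "v > 0" by (simp add: Iset_def)
  from vI obtain n where n: "in_level x v n" by (auto simp: Iset_def)
  have "nI x v = (THE n. in_level x v n)" using vI by (simp add: nI_def)
  also have "\<dots> = n" using n level_unique[OF adm] by (intro the_equality) auto
  finally show "in_level x v (nI x v)" using n by simp
qed

lemma nI_ge1: "in_level x v n \<Longrightarrow> n \<ge> 1" by (simp add: in_level_def)

lemma nI_x: assumes adm: "admissible_seq x" and "n \<ge> 1" shows "nI x (x n) = n"
  using assms adm_pos[OF adm] by (intro nI_eq) (auto simp: in_level_def intro!: exI[of _ "\<lambda>_. 0"])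

lemma nI_sum: assumes adm: "admissible_seq x" and u: "nI x u = m" and m1: "m \<ge> 1"
  and w: "nI x w = Suc m" shows "nI x (u + w) = Suc m"
proof -
  have up: "u > 0" "in_level x u m" using nI_pos[OF adm, of u] u m1 by auto
  have wp: "w > 0" "in_level x w (Suc m)" using nI_pos[OF adm, of w] w by auto
  obtain k where k: "u = x m + (\<Sum>i=1..<m. of_int (k i) * x i)" using up by (auto simp: in_level_def)
  obtain k' where k': "w = x (Suc m) + (\<Sum>i=1..<Suc m. of_int (k' i) * x i)" using wp by (auto simp: in_level_def)
  define k'' where "k'' i = k' i + (if i = m then 1 else 0) + (if i < m then k i else 0)" for i
  have e1: "(\<Sum>i=1..<Suc m. of_int (if i = m then 1 else 0) * x i) = x m"
  proof -
    have "(\<Sum>i=1..<Suc m. of_int (if i = m then 1 else 0) * x i) = (\<Sum>i=1..<Suc m. if i = m then x i else 0)"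
      by (rule sum.cong) auto
    then show ?thesis using m1 by (simp add: sum.delta)
  qed
  have e2: "(\<Sum>i=1..<Suc m. of_int (if i < m then k i else 0) * x i) = (\<Sum>i=1..<m. of_int (k i) * x i)"
    by (intro sum.mono_neutral_cong_right) auto
  have "(\<Sum>i=1..<Suc m. of_int (k'' i) * x i) = (\<Sum>i=1..<Suc m. of_int (k' i) * x i)
     + (\<Sum>i=1..<Suc m. of_int (if i = m then 1 else 0) * x i) + (\<Sum>i=1..<Suc m. of_int (if i < m then k i else 0) * x i)"
    unfolding k''_def by (simp add: algebra_simps sum.distrib)
  then have "u + w = x (Suc m) + (\<Sum>i=1..<Suc m. of_int (k'' i) * x i)"
    using e1 e2 k k' by simp
  then have "in_level x (u + w) (Suc m)" by (auto simp: in_level_def)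
  then show ?thesis using up wp by (intro nI_eq[OF adm]) auto
qed

lemma Kern_eq: "Kern x u w = (if nI x u \<ge> 1 \<and> nI x w = Suc (nI x u) then 8 ^ nI x u
   else if nI x w \<ge> 1 \<and> nI x u = Suc (nI x w) then 8 ^ nI x w else 0)"
proof -
  have key: "{a, b} = {n, Suc n} \<longleftrightarrow> (a = n \<and> b = Suc n) \<or> (a = Suc n \<and> b = n)" for a b n :: nat
    by (auto simp: doubleton_eq_iff)
  show ?thesis
  proof (cases "nI x u \<ge> 1 \<and> nI x w = Suc (nI x u)")
    case True
    have "(SOME n. n \<ge> 1 \<and> {nI x u, nI x w} = {n, Suc n}) = nI x u"
      using True by (intro some_equality) (auto simp: key)
    then show ?thesis using True unfolding Kern_def by (auto simp: key)
  next
    case F1: False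
    show ?thesis
    proof (cases "nI x w \<ge> 1 \<and> nI x u = Suc (nI x w)")
      case True
      have "(SOME n. n \<ge> 1 \<and> {nI x u, nI x w} = {n, Suc n}) = nI x w"
        using True by (intro some_equality) (auto simp: key)
      then show ?thesis using True F1 unfolding Kern_def by (auto simp: key)
    next
      case False
      then show ?thesis using F1 unfolding Kern_def by (auto simp: key)
    qed
  qed
qed

lemma Kern_nonneg: "Kern x u w \<ge> 0" by (simp add: Kern_eq)


lemma countable_level: "countable {v. in_level x v n}"
proof -
  define \<phi> where "\<phi> l = x n + (\<Sum>i=1..<n. of_int (l ! i) * x i)" for l :: "int list"
  have sub: "{v. in_level x v n} \<subseteq> \<phi> ` UNIV"
  proof
    fix v assume "v \<in> {v. in_level x v n}"
    then obtain k where k: "v = x n + (\<Sum>i=1..<n. of_int (k i) * x i)" by (auto simp: in_level_def)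
    have "\<phi> (map k [0..<n]) = v" unfolding \<phi>_def k by (intro arg_cong2[where f="(+)"] refl sum.cong) auto
    then show "v \<in> \<phi> ` UNIV" by (metis rangeI)
  qed
  have "countable (\<phi> ` UNIV)" by (intro countable_image countableI_type)
  then show ?thesis using sub by (rule countable_subset[rotated])
qed

lemma level_set_eq: assumes adm: "admissible_seq x" and m1: "m \<ge> 1"
  shows "{v. nI x v = m} = {v. v > 0 \<and> in_level x v m}"
proof safe
  fix v assume "m = nI x v"
  then show "v > 0" "in_level x v (nI x v)" using nI_pos[OF adm, of v] m1 by auto
next
  fix v assume "v > 0" "in_level x v m"
  then show "nI x v = m" by (rule nI_eq[OF adm])
qed

lemma level_sets_pos: assumes adm: "admissible_seq x" and k: "k \<ge> 1"
  shows "{v. nI x v = k} \<in> sets borel"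
proof -
  have "countable {v. v > 0 \<and> in_level x v k}"
    by (rule countable_subset[OF _ countable_level[of x k]]) auto
  then have "{v. v > 0 \<and> in_level x v k} \<in> sets borel" by (rule sets.countable[rotated]) simp
  then show ?thesis unfolding level_set_eq[OF adm k] .
qed

lemma level_sets: assumes adm: "admissible_seq x"
  shows "{v. nI x v = m} \<in> sets borel"
proof (cases "m \<ge> 1")
  case True then show ?thesis by (rule level_sets_pos[OF adm])
next
  case False
  then have m0: "m = 0" by simp
  have eq: "{v. nI x v = 0} = space borel - (\<Union>k\<in>{1..}. {v. nI x v = k})"
    by (auto simp: not_less_eq_eq)
  have "(\<Union>k\<in>{1..}. {v. nI x v = k}) \<in> sets borel"
    by (rule sets.countable_UN') (use level_sets_pos[OF adm] in force)+
  then show ?thesis unfolding m0 eq by (rule sets.compl_sets)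
qed

lemma nI_measurable: assumes adm: "admissible_seq x"
  shows "nI x \<in> measurable borel (count_space UNIV)"
proof (rule measurable_count_space_eq2_countable[THEN iffD2], safe)
  fix a
  have "nI x -` {a} \<inter> space borel = {v. nI x v = a}" by auto
  then show "nI x -` {a} \<inter> space borel \<in> sets borel" using level_sets[OF adm, of a] by simp
qed simp_all


lemma deriv_cont_on:
  fixes f f' :: "real \<Rightarrow> real"
  assumes d: "\<And>t. t \<ge> 0 \<Longrightarrow> (f has_real_derivative f' t) (at t within {0..})"
  shows "continuous_on {0..} f"
  unfolding continuous_on_eq_continuous_within using d DERIV_continuous by fastforce

lemma mono_deriv:
  fixes f f' :: "real \<Rightarrow> real"
  assumes d: "\<And>t. t \<ge> 0 \<Longrightarrow> (f has_real_derivative f' t) (at t within {0..})"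
    and nn: "\<And>t. t \<ge> 0 \<Longrightarrow> f' t \<ge> 0" and a0: "0 \<le> a" and ab: "a \<le> b"
  shows "f a \<le> f b"
proof (rule DERIV_nonneg_imp_increasing_open[OF ab])
  fix y assume y: "a < y" "y < b"
  then have y0: "y > 0" using a0 by simp
  have "(f has_real_derivative f' y) (at y within {0<..})"
    by (rule has_field_derivative_subset[OF d]) (use y0 in auto)
  moreover have "at y within {0<..} = at y" using y0 by (intro at_within_open) auto
  ultimately have "DERIV f y :> f' y" by simp
  then show "\<exists>z. DERIV f y :> z \<and> z \<ge> 0" using nn y0 by auto
next
  show "continuous_on {a..b} f"
    by (rule continuous_on_subset[OF deriv_cont_on[OF d]]) (use a0 in auto)
qed

lemma mono_deriv_neg:
  fixes f f' :: "real \<Rightarrow> real"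
  assumes d: "\<And>t. t \<ge> 0 \<Longrightarrow> (f has_real_derivative f' t) (at t within {0..})"
    and nn: "\<And>t. t \<ge> 0 \<Longrightarrow> f' t \<le> 0" and a0: "0 \<le> a" and ab: "a \<le> b"
  shows "f b \<le> f a"
proof -
  have "(\<lambda>t. - f t) a \<le> (\<lambda>t. - f t) b"
    by (rule mono_deriv[where f'="\<lambda>t. - f' t"]) (use d nn a0 ab in \<open>auto intro: derivative_intros\<close>)
  then show ?thesis by simp
qed

lemma ode_cont: assumes "ode_sol m" "n \<ge> 1" shows "continuous_on {0..} (m n)"
  by (rule deriv_cont_on) (use assms in \<open>auto simp: ode_sol_def\<close>)

lemma ode_exp:
  assumes ode: "ode_sol m" and n1: "n \<ge> 1" and t0: "t \<ge> 0"
  shows "m n t = m n 0 * exp (- (8 ^ n) * integral {0..t} (m (Suc n)))"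
proof -
  have cont: "continuous_on {0..t} (m (Suc n))"
    by (rule continuous_on_subset[OF ode_cont[OF ode]]) auto
  define g where "g s = m n s * exp (8 ^ n * integral {0..s} (m (Suc n)))" for s
  have "\<exists>c. \<forall>s\<in>{0..t}. g s = c"
  proof (rule has_field_derivative_zero_constant)
    fix s assume s: "s \<in> {0..t}"
    have d1: "(m n has_real_derivative (- (8 ^ n) * m n s * m (Suc n) s)) (at s within {0..t})"
      by (rule has_field_derivative_subset[of _ _ _ "{0..}"]) (use ode n1 s in \<open>auto simp: ode_sol_def\<close>)
    have d2: "((\<lambda>x. integral {0..x} (m (Suc n))) has_real_derivative m (Suc n) s) (at s within {0..t})"
      by (rule integral_has_real_derivative[OF cont s])
    have d3: "((\<lambda>x. exp (8 ^ n * integral {0..x} (m (Suc n)))) has_real_derivative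
        exp (8 ^ n * integral {0..s} (m (Suc n))) * (8 ^ n * m (Suc n) s)) (at s within {0..t})"
      by (rule DERIV_chain2[OF DERIV_exp DERIV_cmult[OF d2]])
    have "(g has_real_derivative
        ((- (8 ^ n) * m n s * m (Suc n) s) * exp (8 ^ n * integral {0..s} (m (Suc n)))
         + (exp (8 ^ n * integral {0..s} (m (Suc n))) * (8 ^ n * m (Suc n) s)) * m n s)) (at s within {0..t})"
      unfolding g_def by (rule DERIV_mult[OF d1 d3])
    then show "(g has_real_derivative 0) (at s within {0..t})"
      by (simp add: algebra_simps)
  qed simp
  then obtain c where c: "\<forall>s\<in>{0..t}. g s = c" by blast
  have "g t = g 0" using c t0 by auto
  then have "m n t * exp (8 ^ n * integral {0..t} (m (Suc n))) = m n 0"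
    by (simp add: g_def)
  then show ?thesis by (simp add: exp_minus field_simps)
qed

locale odeM =
  fixes m :: "nat \<Rightarrow> real \<Rightarrow> real" and M :: nat
  assumes ode: "ode_sol m" and M1: "M \<ge> 1"
    and init: "\<And>n. n \<ge> 1 \<Longrightarrow> m n 0 = (if n \<le> M then (1/2) ^ n else 0)"
begin

lemma nonneg: "n \<ge> 1 \<Longrightarrow> t \<ge> 0 \<Longrightarrow> m n t \<ge> 0"
  using ode_exp[OF ode, of n t] init[of n] by auto

lemma zero_above: "n > M \<Longrightarrow> t \<ge> 0 \<Longrightarrow> m n t = 0"
  using ode_exp[OF ode, of n t] init[of n] M1 by auto

lemma deriv: "n \<ge> 1 \<Longrightarrow> t \<ge> 0 \<Longrightarrow> (m n has_real_derivative (- (8 ^ n) * m n t * m (Suc n) t)) (at t within {0..})"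
  using ode by (auto simp: ode_sol_def)

lemma decr: "n \<ge> 1 \<Longrightarrow> 0 \<le> s \<Longrightarrow> s \<le> t \<Longrightarrow> m n t \<le> m n s"
  by (rule mono_deriv_neg[OF deriv]) (auto intro!: mult_nonneg_nonneg nonneg simp: mult_le_0_iff)

lemma le_init: "n \<ge> 1 \<Longrightarrow> 0 \<le> t \<Longrightarrow> m n t \<le> (1/2) ^ n"
  using decr[of n 0 t] init[of n] zero_above[of n t] by (cases "n \<le> M") auto

lemma top_const: assumes "t \<ge> 0" shows "m M t = (1/2) ^ M"
proof -
  have "\<exists>c. \<forall>s\<in>{0..}. m M s = c"
  proof (rule has_field_derivative_zero_constant)
    fix s :: real assume s: "s \<in> {0..}"
    have "(m M has_real_derivative (- (8 ^ M) * m M s * m (Suc M) s)) (at s within {0..})"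
      using deriv[of M s] M1 s by auto
    moreover have "m (Suc M) s = 0" using zero_above[of "Suc M" s] s by auto
    ultimately show "(m M has_real_derivative 0) (at s within {0..})" by simp
  qed simp
  then obtain c where "\<forall>s\<in>{0..}. m M s = c" by blast
  then have "m M t = m M 0" using \<open>t \<ge> 0\<close> by auto
  then show ?thesis using init[of M] M1 by simp
qed

end


lemma ar0: "(8::real) ^ (2 * k) * (1 / 2) ^ (2 * k) = 16 ^ k"
proof -
  have "(8::real) ^ (2 * k) * (1 / 2) ^ (2 * k) = 4 ^ (2*k)" by (simp add: power_mult_distrib[symmetric])
  also have "\<dots> = 16 ^ k" by (simp add: power_mult)
  finally show ?thesis .
qed

lemma ar1: "(8::real) ^ (2*k+1) * (1/2) ^ (2*k+3) = 16 ^ k"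
proof -
  have "(8::real)^(2*k+1) * (1/2)^(2*k+3) = (8^(2*k) * (1/2)^(2*k)) * (8 * (1/2)^3)" by (simp add: power_add)
  also have "(8::real) * (1/2)^3 = 1" by (simp add: eval_nat_numeral)
  finally show ?thesis by (simp add: ar0)
qed

lemma ar2: "(8::real) ^ (2*k) * (1/2) ^ (2*k+1) = 16 ^ k / 2"
proof -
  have "(8::real)^(2*k) * (1/2)^(2*k+1) = (8^(2*k) * (1/2)^(2*k)) * (1/2)" by (simp add: power_add)
  then show ?thesis by (simp add: ar0)
qed

lemma e12: "exp (-(1/2::real)) \<ge> 1/2"
proof -
  have "exp (1/2::real) \<le> 2"
  proof -
    have "exp (1/2::real) ^ 2 = exp 1" by (simp add: exp_double[symmetric]  power2_eq_square exp_add[symmetric])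
    also have "\<dots> \<le> 4" using exp_le by simp
    finally have "exp (1/2::real) ^ 2 \<le> 2 ^ 2" by simp
    then show ?thesis by (rule power2_le_imp_le) simp
  qed
  then show ?thesis by (simp add: exp_minus field_simps)
qed

context odeM begin

lemma odd_from_even:
  assumes MN: "M = 2 * N" and kN: "k + 1 \<le> N"
    and ev: "\<And>t. t \<ge> 0 \<Longrightarrow> m (2 * (k + 1)) t \<ge> (1/2) ^ (2 * (k + 1)) / 2"
    and s0: "s \<ge> 0"
  shows "m (2 * k + 1) s \<le> (1/2) ^ (2 * k + 1) * exp (- (16 ^ k) * s)"
proof -
  define g where "g s = m (2 * k + 1) s * exp (16 ^ k * s)" for s
  have "g s \<le> g 0"
  proof (rule mono_deriv_neg[where f = g and f' = "\<lambda>s. exp (16 ^ k * s) * m (2*k+1) s * (16 ^ k - 8 ^ (2*k+1) * m (2*k+2) s)"])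
    fix t :: real assume t: "t \<ge> 0"
    have d1: "(m (2*k+1) has_real_derivative (- (8 ^ (2*k+1)) * m (2*k+1) t * m (2*k+2) t)) (at t within {0..})"
      using deriv[of "2*k+1" t] t by simp
    have d2: "((\<lambda>s. exp (16 ^ k * s)) has_real_derivative exp (16 ^ k * t) * (16 ^ k * 1)) (at t within {0..})"
      by (rule DERIV_chain2[OF DERIV_exp DERIV_cmult[OF DERIV_ident]])
    have "(g has_real_derivative (- (8 ^ (2*k+1)) * m (2*k+1) t * m (2*k+2) t) * exp (16 ^ k * t)
          + exp (16 ^ k * t) * (16 ^ k * 1) * m (2*k+1) t) (at t within {0..})"
      unfolding g_def by (rule DERIV_mult[OF d1 d2])
    then show "(g has_real_derivative exp (16 ^ k * t) * m (2*k+1) t * (16 ^ k - 8 ^ (2*k+1) * m (2*k+2) t)) (at t within {0..})"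
      by (simp add: algebra_simps)
  next
    fix t :: real assume t: "t \<ge> 0"
    have "8 ^ (2*k+1) * m (2*k+2) t \<ge> 8 ^ (2*k+1) * ((1/2) ^ (2*k+2) / 2)"
      using ev[OF t] by (intro mult_left_mono) auto
    also have "8 ^ (2*k+1) * ((1/2) ^ (2*k+2) / 2) = (8::real) ^ (2*k+1) * (1/2) ^ (2*k+3)"
      by (simp add: eval_nat_numeral)
    also have "\<dots> = 16 ^ k" by (rule ar1)
    finally have "16 ^ k - 8 ^ (2*k+1) * m (2*k+2) t \<le> 0" by simp
    moreover have "exp (16 ^ k * t) * m (2*k+1) t \<ge> 0" using nonneg[of "2*k+1" t] t by simp
    ultimately show "exp (16 ^ k * t) * m (2*k+1) t * (16 ^ k - 8 ^ (2*k+1) * m (2*k+2) t) \<le> 0"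
      by (simp add: mult_nonneg_nonpos)
  qed (use s0 in auto)
  moreover have "g 0 = (1/2) ^ (2*k+1)" using init[of "2*k+1"] MN kN by (simp add: g_def)
  ultimately have "m (2 * k + 1) s * exp (16 ^ k * s) \<le> (1/2) ^ (2*k+1)" by (simp add: g_def)
  then show ?thesis by (simp add: exp_minus field_simps)
qed

lemma even_from_odd:
  assumes MN: "M = 2 * N" and k1: "1 \<le> k" and kN: "k \<le> N"
    and od: "\<And>s. s \<ge> 0 \<Longrightarrow> m (2 * k + 1) s \<le> (1/2) ^ (2 * k + 1) * exp (- (16 ^ k) * s)"
    and t0: "t \<ge> 0"
  shows "m (2 * k) t \<ge> (1/2) ^ (2 * k) / 2"
proof -
  define E where "E s = exp (- (1/2) * exp (- (16 ^ k) * s))" for s :: real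
  define h where "h s = m (2 * k) s * E s" for s
  have "h 0 \<le> h t"
  proof (rule mono_deriv[where f = h and f' = "\<lambda>s. E s * m (2*k) s * ((1/2) * 16 ^ k * exp (- (16 ^ k) * s) - 8 ^ (2*k) * m (2*k+1) s)"])
    fix s :: real assume s: "s \<ge> 0"
    have d1: "(m (2*k) has_real_derivative (- (8 ^ (2*k)) * m (2*k) s * m (Suc (2*k)) s)) (at s within {0..})"
      using deriv[of "2*k" s] s k1 by simp
    have d0: "((\<lambda>s. - (1/2) * exp (- (16 ^ k) * s)) has_real_derivative (- (1/2)) * (exp (- (16 ^ k) * s) * (- (16 ^ k) * 1))) (at s within {0..})"
      by (rule DERIV_cmult[OF DERIV_chain2[OF DERIV_exp DERIV_cmult[OF DERIV_ident]]])
    have d2: "(E has_real_derivative exp (- (1/2) * exp (- (16 ^ k) * s)) * ((- (1/2)) * (exp (- (16 ^ k) * s) * (- (16 ^ k) * 1)))) (at s within {0..})"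
      unfolding E_def by (rule DERIV_chain2[OF DERIV_exp d0])
    have "(h has_real_derivative (- (8 ^ (2*k)) * m (2*k) s * m (Suc (2*k)) s) * E s
        + exp (- (1/2) * exp (- (16 ^ k) * s)) * ((- (1/2)) * (exp (- (16 ^ k) * s) * (- (16 ^ k) * 1))) * m (2*k) s) (at s within {0..})"
      unfolding h_def by (rule DERIV_mult[OF d1 d2])
    then show "(h has_real_derivative E s * m (2*k) s * ((1/2) * 16 ^ k * exp (- (16 ^ k) * s) - 8 ^ (2*k) * m (2*k+1) s)) (at s within {0..})"
      by (simp add: algebra_simps E_def)
  next
    fix s :: real assume s: "s \<ge> 0"
    have "8 ^ (2*k) * m (2*k+1) s \<le> 8 ^ (2*k) * ((1/2) ^ (2 * k + 1) * exp (- (16 ^ k) * s))"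
      using od[OF s] by (intro mult_left_mono) auto
    also have "\<dots> = ((8::real) ^ (2*k) * (1/2) ^ (2 * k + 1)) * exp (- (16 ^ k) * s)" by simp
    also have "\<dots> = (1/2) * 16 ^ k * exp (- (16 ^ k) * s)" unfolding ar2 by simp
    finally have "(1/2) * 16 ^ k * exp (- (16 ^ k) * s) - 8 ^ (2*k) * m (2*k+1) s \<ge> 0" by simp
    moreover have "E s * m (2*k) s \<ge> 0" using nonneg[of "2*k" s] s k1 by (simp add: E_def)
    ultimately show "E s * m (2*k) s * ((1/2) * 16 ^ k * exp (- (16 ^ k) * s) - 8 ^ (2*k) * m (2*k+1) s) \<ge> 0"
      by simp
  qed (use t0 in auto)
  moreover have "h 0 = (1/2) ^ (2*k) * exp (- (1/2))" using init[of "2*k"] MN kN k1 by (simp add: h_def E_def)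
  ultimately have A: "(1/2) ^ (2*k) * exp (- (1/2)) \<le> m (2 * k) t * E t" by (simp add: h_def)
  have "E t \<le> 1" "E t > 0" unfolding E_def by auto
  moreover have "m (2*k) t \<ge> 0" using nonneg[of "2*k" t] t0 k1 by simp
  ultimately have "m (2 * k) t * E t \<le> m (2 * k) t" by (simp add: mult_left_le)
  with A have "(1/2) ^ (2*k) * exp (- (1/2)) \<le> m (2 * k) t" by simp
  moreover have "(1/2) ^ (2*k) / 2 \<le> (1/2::real) ^ (2*k) * exp (- (1/2))"
  proof -
    have "(1/2::real) ^ (2*k) * (1/2) \<le> (1/2) ^ (2*k) * exp (- (1/2))"
      by (rule mult_left_mono[OF e12]) simp
    then show ?thesis by simp
  qed
  ultimately show ?thesis by (meson order_trans)
qed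

lemma even_lower:
  assumes MN: "M = 2 * N" and k1: "1 \<le> k" and kN: "k \<le> N"
  shows "\<forall>t\<ge>0. m (2 * k) t \<ge> (1/2) ^ (2 * k) / 2"
  using kN k1
proof (induction k rule: inc_induct)
  case base
  show ?case using top_const MN by auto
next
  case (step j)
  have od: "\<And>s. s \<ge> 0 \<Longrightarrow> m (2 * j + 1) s \<le> (1/2) ^ (2 * j + 1) * exp (- (16 ^ j) * s)"
    by (rule odd_from_even[OF MN]) (use step in auto)
  show ?case using even_from_odd[OF MN step(4) _ od] step by auto
qed

lemma odd_upper:
  assumes MN: "M = 2 * N" and kN: "k + 1 \<le> N" and s0: "s \<ge> 0"
  shows "m (2 * k + 1) s \<le> (1/2) ^ (2 * k + 1) * exp (- (16 ^ k) * s)"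
  by (rule odd_from_even[OF MN kN _ s0]) (use even_lower[OF MN _ kN] in auto)

end


lemma GL:
  fixes h :: "nat \<Rightarrow> real \<Rightarrow> real" and \<psi> \<Psi> :: "real \<Rightarrow> real"
  assumes hi: "\<And>j. set_integrable lborel {0..t} (h j)"
    and conv: "AE s in lborel. s \<in> {0..t} \<longrightarrow> (\<lambda>j. h j s) \<longlonglongrightarrow> \<psi> s"
    and bnd: "\<And>j. AE s in lborel. s \<in> {0..t} \<longrightarrow> \<bar>h j s\<bar> \<le> C"
    and lim: "(\<lambda>j. LINT s:{0..t}|lborel. h j s) \<longlonglongrightarrow> Lv"
    and \<Psi>i: "set_integrable lborel {0..t} \<Psi>"
    and le: "AE s in lborel. s \<in> {0..t} \<longrightarrow> \<psi> s \<le> \<Psi> s"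
  shows "Lv \<le> (LINT s:{0..t}|lborel. \<Psi> s)"
proof -
  define I where "I s = (indicator {0..t} s :: real)" for s
  have hi': "integrable lborel (\<lambda>s. I s * h j s)" for j
    using hi[of j] unfolding set_integrable_def I_def by simp
  have \<Psi>i': "integrable lborel (\<lambda>s. I s * \<Psi> s)"
    using \<Psi>i unfolding set_integrable_def I_def by simp
  define d where "d j s = I s * h j s - I s * \<Psi> s" for j s
  define e where "e j s = (\<bar>d j s\<bar> + d j s) / 2" for j s
  have di: "integrable lborel (d j)" for j unfolding d_def using hi' \<Psi>i' by auto
  have ei: "integrable lborel (e j)" for j unfolding e_def using di[of j] by auto
  have fin: "emeasure lborel {0..t} < \<infinity>"
  proof (cases "0 \<le> t")
    case True then show ?thesis by (simp add: emeasure_lborel_Icc)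
  next
    case False then have "{0..t} = ({}::real set)" by auto
    then show ?thesis by simp
  qed
  have Ii: "integrable lborel (\<lambda>s. I s * C)"
    unfolding I_def by (intro integrable_mult_left integrable_real_indicator fin) simp
  have f1: "(\<lambda>s. 0::real) \<in> borel_measurable lborel" by simp
  have f2: "\<And>j. e j \<in> borel_measurable lborel" using ei by auto
  have f3: "integrable lborel (\<lambda>s. \<bar>I s * C\<bar> + \<bar>I s * \<Psi> s\<bar>)" using Ii \<Psi>i' by auto
  have f4: "AE s in lborel. (\<lambda>j. e j s) \<longlonglongrightarrow> 0"
      using conv le
    proof eventually_elim
      case (elim s)
      show ?case
      proof (cases "s \<in> {0..t}")
        case True
        then have c: "(\<lambda>j. d j s) \<longlonglongrightarrow> \<psi> s - \<Psi> s" using elim unfolding d_def I_def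
          by (auto intro!: tendsto_diff)
        have "(\<lambda>j. e j s) \<longlonglongrightarrow> (\<bar>\<psi> s - \<Psi> s\<bar> + (\<psi> s - \<Psi> s)) / 2"
          unfolding e_def by (intro tendsto_divide tendsto_add tendsto_rabs c) auto
        moreover have "(\<bar>\<psi> s - \<Psi> s\<bar> + (\<psi> s - \<Psi> s)) / 2 = 0" using elim True by auto
        ultimately show ?thesis by simp
      next
        case False
        then show ?thesis by (simp add: e_def d_def I_def)
      qed
    qed
  have f5: "AE s in lborel. norm (e j s) \<le> \<bar>I s * C\<bar> + \<bar>I s * \<Psi> s\<bar>" for j
      using bnd[of j]
    proof eventually_elim
      case (elim s)
      show ?case
      proof (cases "s \<in> {0..t}")
        case True
        then have "\<bar>h j s\<bar> \<le> C" using elim by auto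
        then show ?thesis using True by (auto simp: e_def d_def I_def)
      next
        case False
        then show ?thesis by (simp add: e_def d_def I_def)
      qed
    qed
  have e0: "(\<lambda>j. integral\<^sup>L lborel (e j)) \<longlonglongrightarrow> 0"
    using integral_dominated_convergence[OF f1 f2 f3 f4 f5] by simp
  have pw: "a \<le> b + (\<bar>a - b\<bar> + (a - b)) / 2" for a b :: real
    by (simp add: abs_if field_simps)
  have ineq: "(LINT s:{0..t}|lborel. h j s) \<le> (LINT s:{0..t}|lborel. \<Psi> s) + integral\<^sup>L lborel (e j)" for j
  proof -
    have "(LINT s:{0..t}|lborel. h j s) = integral\<^sup>L lborel (\<lambda>s. I s * h j s)"
      unfolding set_lebesgue_integral_def I_def by simp
    also have "\<dots> \<le> integral\<^sup>L lborel (\<lambda>s. I s * \<Psi> s + e j s)"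
      by (intro integral_mono hi' Bochner_Integration.integrable_add \<Psi>i' ei, unfold e_def d_def, rule pw)
    also have "\<dots> = integral\<^sup>L lborel (\<lambda>s. I s * \<Psi> s) + integral\<^sup>L lborel (e j)"
      by (intro Bochner_Integration.integral_add \<Psi>i' ei)
    also have "integral\<^sup>L lborel (\<lambda>s. I s * \<Psi> s) = (LINT s:{0..t}|lborel. \<Psi> s)"
      unfolding set_lebesgue_integral_def I_def by simp
    finally show ?thesis .
  qed
  have "Lv \<le> (LINT s:{0..t}|lborel. \<Psi> s) + 0"
    by (rule LIMSEQ_le[OF lim tendsto_add[OF tendsto_const e0]]) (use ineq in auto)
  then show ?thesis by simp
qed

lemma prod_sep:
  fixes f g :: "'a \<Rightarrow> real"
  assumes sf1: "sigma_finite_measure M1" and sf2: "sigma_finite_measure M2"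
    and fi: "integrable M1 f" and gi: "integrable M2 g"
  shows "integrable (M1 \<Otimes>\<^sub>M M2) (\<lambda>p. f (fst p) * g (snd p))"
    and "integral\<^sup>L (M1 \<Otimes>\<^sub>M M2) (\<lambda>p. f (fst p) * g (snd p)) = integral\<^sup>L M1 f * integral\<^sup>L M2 g"
proof -
  interpret pair_sigma_finite M1 M2 using sf1 sf2 by (simp add: pair_sigma_finite_def)
  have fm[measurable]: "f \<in> borel_measurable M1" using fi by auto
  have gm[measurable]: "g \<in> borel_measurable M2" using gi by auto
  show int: "integrable (M1 \<Otimes>\<^sub>M M2) (\<lambda>p. f (fst p) * g (snd p))"
  proof (rule Fubini_integrable)
    show "(\<lambda>p. f (fst p) * g (snd p)) \<in> borel_measurable (M1 \<Otimes>\<^sub>M M2)" by measurable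
    have "(\<lambda>x. \<integral>y. norm (f (fst (x, y)) * g (snd (x, y))) \<partial>M2) = (\<lambda>x. \<bar>f x\<bar> * (\<integral>y. \<bar>g y\<bar> \<partial>M2))"
      by (simp add: abs_mult)
    moreover have "integrable M1 (\<lambda>x. \<bar>f x\<bar> * (\<integral>y. \<bar>g y\<bar> \<partial>M2))"
      using fi by (intro integrable_mult_left) auto
    ultimately show "integrable M1 (\<lambda>x. \<integral>y. norm (f (fst (x, y)) * g (snd (x, y))) \<partial>M2)" by simp
    show "AE x in M1. integrable M2 (\<lambda>y. f (fst (x, y)) * g (snd (x, y)))"
      using gi by auto
  qed
  have "integral\<^sup>L (M1 \<Otimes>\<^sub>M M2) (\<lambda>p. f (fst p) * g (snd p)) = (\<integral>x. (\<integral>y. f (fst (x, y)) * g (snd (x, y)) \<partial>M2) \<partial>M1)"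
    by (rule integral_fst'[OF int, symmetric])
  also have "\<dots> = (\<integral>x. f x * integral\<^sup>L M2 g \<partial>M1)" by simp
  also have "\<dots> = integral\<^sup>L M1 f * integral\<^sup>L M2 g" by simp
  finally show "integral\<^sup>L (M1 \<Otimes>\<^sub>M M2) (\<lambda>p. f (fst p) * g (snd p)) = integral\<^sup>L M1 f * integral\<^sup>L M2 g" .
qed

lemma beta_to_zero:
  fixes \<beta> e :: "nat \<Rightarrow> real"
  assumes rec: "\<And>k. \<beta> (Suc k) \<le> (e k + \<beta> k) / 2" and nn: "\<And>k. \<beta> k \<ge> 0"
    and e0: "e \<longlonglongrightarrow> 0"
  shows "\<beta> \<longlonglongrightarrow> 0"
proof (rule LIMSEQ_I)
  fix r :: real assume r: "r > 0"
  from LIMSEQ_D[OF e0, of "r/2"] r obtain K where K: "\<And>k. k \<ge> K \<Longrightarrow> \<bar>e k\<bar> < r/2" by auto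
  have bnd: "\<beta> (K + i) \<le> r/2 + (1/2) ^ i * \<beta> K" for i
  proof (induction i)
    case 0 then show ?case using r by simp
  next
    case (Suc i)
    have "\<beta> (K + Suc i) \<le> (e (K + i) + \<beta> (K + i)) / 2" using rec[of "K+i"] by simp
    also have "\<dots> \<le> (r/2 + (r/2 + (1/2) ^ i * \<beta> K)) / 2" using K[of "K+i"] Suc by auto
    also have "\<dots> = r/2 + (1/2) ^ Suc i * \<beta> K" by simp
    finally show ?case .
  qed
  have "(\<lambda>i. (1/2::real) ^ i * \<beta> K) \<longlonglongrightarrow> 0 * \<beta> K"
    by (intro tendsto_mult LIMSEQ_power_zero) auto
  then have "(\<lambda>i. (1/2::real) ^ i * \<beta> K) \<longlonglongrightarrow> 0" by simp
  from LIMSEQ_D[OF this, of "r/2"] r obtain I where "\<forall>i\<ge>I. norm ((1/2::real) ^ i * \<beta> K - 0) < r/2"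
    by auto
  then have I: "\<And>i. i \<ge> I \<Longrightarrow> (1/2::real) ^ i * \<beta> K < r/2" by auto
  show "\<exists>no. \<forall>n\<ge>no. norm (\<beta> n - 0) < r"
  proof (intro exI allI impI)
    fix n assume n: "n \<ge> K + I"
    define i where "i = n - K"
    have i: "n = K + i" "i \<ge> I" using n unfolding i_def by arith+
    have "\<beta> n < r" using bnd[of i] I[OF i(2)] i(1) by simp
    then show "norm (\<beta> n - 0) < r" using nn[of n] by simp
  qed
qed


locale hyps =
  fixes x :: "nat \<Rightarrow> real" and mM :: "nat \<Rightarrow> nat \<Rightarrow> real \<Rightarrow> real"
    and mplus :: "nat \<Rightarrow> real \<Rightarrow> real" and mu :: "real \<Rightarrow> real measure"
  assumes adm: "admissible_seq x"
    and mM_sol: "\<forall>M\<ge>1. ode_sol (mM M) \<and> (\<forall>n\<ge>1. mM M n 0 = (if n \<le> M then (1/2) ^ n else 0))"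
    and mplus_lim: "\<forall>n\<ge>1. \<forall>t\<ge>0. (\<lambda>N. mM (2 * N) n t) \<longlonglongrightarrow> mplus n t"
    and finite_mass: "summable (\<lambda>n. x (Suc n) * (1/2) ^ Suc n)"
    and sol: "smol_solution x mu"
    and levels: "\<forall>n\<ge>1. \<forall>t\<ge>0. emeasure (mu t) {v. nI x v = n} = ennreal (mplus n t)"
begin

lemma odeM_inst: "N \<ge> 1 \<Longrightarrow> odeM (mM (2*N)) (2*N)"
  using mM_sol by (unfold_locales) auto

lemma mplus_nonneg: assumes "n \<ge> 1" "t \<ge> 0" shows "mplus n t \<ge> 0"
proof (rule LIMSEQ_le_const[OF mplus_lim[rule_format, OF assms]])
  show "\<exists>N. \<forall>Na\<ge>N. 0 \<le> mM (2 * Na) n t"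
    using odeM.nonneg[OF odeM_inst] assms by (intro exI[of _ 1]) auto
qed

lemma mplus_le: assumes "n \<ge> 1" "t \<ge> 0" shows "mplus n t \<le> (1/2) ^ n"
proof (rule LIMSEQ_le_const2[OF mplus_lim[rule_format, OF assms]])
  show "\<exists>N. \<forall>Na\<ge>N. mM (2 * Na) n t \<le> (1/2) ^ n"
    using odeM.le_init[OF odeM_inst] assms by (intro exI[of _ 1]) auto
qed

lemma mplus_odd: assumes "s \<ge> 0"
  shows "mplus (2 * k + 1) s \<le> (1/2) ^ (2 * k + 1) * exp (- (16 ^ k) * s)"
proof (rule LIMSEQ_le_const2[OF mplus_lim[rule_format]])
  show "\<exists>N. \<forall>Na\<ge>N. mM (2 * Na) (2 * k + 1) s \<le> (1/2) ^ (2 * k + 1) * exp (- (16 ^ k) * s)"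
  proof (intro exI[of _ "k + 1"] allI impI)
    fix N assume N: "N \<ge> k + 1"
    show "mM (2 * N) (2 * k + 1) s \<le> (1/2) ^ (2 * k + 1) * exp (- (16 ^ k) * s)"
      by (rule odeM.odd_upper[OF odeM_inst refl N assms]) (use N in simp)
  qed
qed (use assms in auto)

lemma mu_sets: "t \<ge> 0 \<Longrightarrow> sets (mu t) = sets borel"
  using sol by (simp add: smol_solution_def)

lemma mu_space: "t \<ge> 0 \<Longrightarrow> space (mu t) = UNIV"
  using sets_eq_imp_space_eq[OF mu_sets] by simp

lemma mu_neg: "t \<ge> 0 \<Longrightarrow> emeasure (mu t) {..0} = 0"
  using sol by (simp add: smol_solution_def)

lemma mu_compact: "t \<ge> 0 \<Longrightarrow> compact B \<Longrightarrow> B \<subseteq> {0<..} \<Longrightarrow> emeasure (mu t) B < \<infinity>"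
  using sol by (simp add: smol_solution_def)

lemma mu_AE_pos: assumes "t \<ge> 0" shows "AE v in mu t. v > 0"
proof (rule AE_I')
  show "{..0} \<in> null_sets (mu t)" using mu_neg[OF assms] mu_sets[OF assms] by (auto simp: null_sets_def)
  show "{v \<in> space (mu t). \<not> 0 < v} \<subseteq> {..0}" by auto
qed

lemma mu_sf: assumes t0: "t \<ge> 0" shows "sigma_finite_measure (mu t)"
  unfolding sigma_finite_measure_def
proof (intro exI[of _ "insert {..0} (range (\<lambda>k::nat. {1 / real (Suc k)..real (Suc k)}))"] conjI)
  show "countable (insert {..0} (range (\<lambda>k::nat. {1 / real (Suc k)..real (Suc k)})))" by simp
  have "insert {..0} (range (\<lambda>k::nat. {1 / real (Suc k)..real (Suc k)})) \<subseteq> sets borel"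
    by (intro insert_subsetI image_subsetI) simp_all
  then show "insert {..0} (range (\<lambda>k::nat. {1 / real (Suc k)..real (Suc k)})) \<subseteq> sets (mu t)"
    by (simp only: mu_sets[OF t0])
  show "\<Union> (insert {..0} (range (\<lambda>k::nat. {1 / real (Suc k)..real (Suc k)}))) = space (mu t)"
  proof -
    have "v \<in> \<Union> (insert {..0} (range (\<lambda>k::nat. {1 / real (Suc k)..real (Suc k)})))" for v :: real
    proof (cases "v \<le> 0")
      case True then show ?thesis by auto
    next
      case False
      then have v: "v > 0" by simp
      define k where "k = nat \<lceil>max v (1/v)\<rceil>"
      have k1: "real (Suc k) \<ge> v" unfolding k_def by linarith
      have k2: "real (Suc k) \<ge> 1 / v" unfolding k_def by linarith
      have "1 / real (Suc k) \<le> v" using k2 v by (simp add: field_simps)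
      then have "v \<in> {1 / real (Suc k)..real (Suc k)}" using k1 by simp
      then show ?thesis by blast
    qed
    then have "\<Union> (insert {..0} (range (\<lambda>k::nat. {1 / real (Suc k)..real (Suc k)}))) = UNIV" by blast
    then show ?thesis using mu_space[OF t0] by simp
  qed
  show "\<forall>a\<in>insert {..0} (range (\<lambda>k::nat. {1 / real (Suc k)..real (Suc k)})). emeasure (mu t) a \<noteq> \<infinity>"
  proof
    fix a assume "a \<in> insert {..0} (range (\<lambda>k::nat. {1 / real (Suc k)..real (Suc k)}))"
    then show "emeasure (mu t) a \<noteq> \<infinity>"
    proof
      assume "a = {..0}" then show ?thesis using mu_neg[OF t0] by simp
    next
      assume "a \<in> range (\<lambda>k::nat. {1 / real (Suc k)..real (Suc k)})"
      then obtain k :: nat where a: "a = {1 / real (Suc k)..real (Suc k)}" by auto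
      have "a \<subseteq> {0<..}" unfolding a by (auto intro: less_le_trans[of 0 "1 / real (Suc k)"])
      then show ?thesis using mu_compact[OF t0, of a] a by auto
    qed
  qed
qed

lemma Lset_meas[measurable]: "{v. nI x v = m} \<in> sets borel"
  by (rule level_sets[OF adm])

lemma Lrange_meas[measurable]: "{v. 1 \<le> nI x v \<and> nI x v \<le> n} \<in> sets borel"
proof -
  have "{v. 1 \<le> nI x v \<and> nI x v \<le> n} = (\<Union>m\<in>{1..n}. {v. nI x v = m})" by auto
  also have "\<dots> \<in> sets borel" by (intro sets.finite_UN) auto
  finally show ?thesis .
qed

lemma level_fin: "n \<ge> 1 \<Longrightarrow> t \<ge> 0 \<Longrightarrow> emeasure (mu t) {v. nI x v = n} < \<infinity>"
  using levels by simp

lemma Lrange_fin: assumes t0: "t \<ge> 0"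
  shows "emeasure (mu t) {v. 1 \<le> nI x v \<and> nI x v \<le> n} \<le> ennreal (real n)"
proof -
  have "emeasure (mu t) {v. 1 \<le> nI x v \<and> nI x v \<le> n} = emeasure (mu t) (\<Union>m\<in>{1..n}. {v. nI x v = m})"
    by (rule arg_cong[where f="emeasure (mu t)"]) auto
  also have "\<dots> \<le> (\<Sum>m\<in>{1..n}. emeasure (mu t) {v. nI x v = m})"
    by (intro emeasure_subadditive_finite) (auto simp: mu_sets[OF t0])
  also have "\<dots> \<le> (\<Sum>m\<in>{1..n}. ennreal 1)"
  proof (intro sum_mono)
    fix m assume m: "m \<in> {1..n}"
    have "mplus m t \<le> 1" using mplus_le[of m t] t0 m by (auto intro: order_trans[OF _ power_le_one])
    then show "emeasure (mu t) {v. nI x v = m} \<le> ennreal 1" using levels m t0 by auto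
  qed
  also have "\<dots> = ennreal (real n)" by (simp add: ennreal_of_nat_eq_real_of_nat)
  finally show ?thesis .
qed

end


context hyps begin

definition w0 :: "nat \<Rightarrow> real" where "w0 n = (if n \<ge> 1 then (1/2) ^ n else 0)"

definition M0 :: real where "M0 = (\<Sum>n. x (Suc n) * (1/2) ^ Suc n)"

abbreviation D0 where "D0 \<equiv> density (count_space UNIV) (\<lambda>n. ennreal (w0 n))"

lemma mu0_eq: "mu0 x = distr D0 borel x"
proof -
  have "(\<lambda>n::nat. if n \<ge> 1 then ennreal ((1/2) ^ n) else 0) = (\<lambda>n. ennreal (w0 n))"
    by (auto simp: w0_def)
  then show ?thesis unfolding mu0_def by simp
qed

lemma x_meas[measurable]: "x \<in> measurable D0 borel"
  by (subst measurable_cong_sets[OF sets_density refl]) simp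

lemma w0_nonneg: "w0 n \<ge> 0" by (simp add: w0_def)

lemma wx_summable: "summable (\<lambda>n. w0 n * x n)"
proof -
  have "(\<lambda>n. w0 (Suc n) * x (Suc n)) = (\<lambda>n. x (Suc n) * (1/2) ^ Suc n)"
    by (auto simp: w0_def)
  then have "summable (\<lambda>n. w0 (Suc n) * x (Suc n))" using finite_mass by simp
  then show ?thesis by (subst summable_Suc_iff[symmetric])
qed

lemma wx_nonneg: "w0 n * x n \<ge> 0"
  using adm_pos[OF adm, of n] by (auto simp: w0_def)

lemma wx_sum: "(\<Sum>n. w0 n * x n) = M0"
proof -
  have "(\<Sum>n. w0 (Suc n) * x (Suc n)) = (\<Sum>n. w0 n * x n) - w0 0 * x 0"
    by (rule suminf_split_head[OF wx_summable])
  moreover have "(\<lambda>n. w0 (Suc n) * x (Suc n)) = (\<lambda>n. x (Suc n) * (1/2) ^ Suc n)"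
    by (auto simp: w0_def)
  ultimately show ?thesis by (simp add: M0_def w0_def)
qed

lemma M0_nonneg: "M0 \<ge> 0"
  using wx_sum suminf_nonneg[OF wx_summable wx_nonneg] by simp

lemma mu0_nn: "(\<integral>\<^sup>+ v. ennreal v \<partial>mu0 x) = ennreal M0"
proof -
  have "(\<integral>\<^sup>+ v. ennreal v \<partial>mu0 x) = (\<integral>\<^sup>+ n. ennreal (x n) \<partial>D0)"
    unfolding mu0_eq by (rule nn_integral_distr) auto
  also have "\<dots> = (\<integral>\<^sup>+ n. ennreal (w0 n) * ennreal (x n) \<partial>count_space UNIV)"
    by (rule nn_integral_density) auto
  also have "\<dots> = (\<Sum>n. ennreal (w0 n) * ennreal (x n))"
    by (rule nn_integral_count_space_nat)
  also have "\<dots> = (\<Sum>n. ennreal (w0 n * x n))"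
    by (intro suminf_cong) (simp add: ennreal_mult' w0_nonneg)
  also have "\<dots> = ennreal (\<Sum>n. w0 n * x n)"
    by (rule suminf_ennreal2[OF wx_nonneg wx_summable])
  finally show ?thesis by (simp add: wx_sum)
qed

lemma mu0_AE: "AE v in mu0 x. \<exists>n\<ge>1. v = x n"
proof -
  have cnt: "countable (x ` {1..})" by simp
  have S: "{v \<in> space borel. \<exists>n\<ge>1. v = x n} \<in> sets borel"
  proof -
    have "{v \<in> space borel. \<exists>n\<ge>1. v = x n} = x ` {1..}" by auto
    also have "\<dots> \<in> sets borel" by (rule sets.countable[OF _ cnt]) simp
    finally show ?thesis .
  qed
  have "AE n in D0. \<exists>m\<ge>1. x n = x m"
  proof (subst AE_density)
    show "(\<lambda>n. ennreal (w0 n)) \<in> borel_measurable (count_space UNIV)" by simp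
    show "AE n in count_space UNIV. 0 < ennreal (w0 n) \<longrightarrow> (\<exists>m\<ge>1. x n = x m)"
      by (auto simp: AE_count_space w0_def split: if_splits)
  qed
  then show ?thesis unfolding mu0_eq by (subst AE_distr_iff[OF x_meas S])
qed

lemma mu0_AE_pos: "AE v in mu0 x. v > 0"
  using mu0_AE by eventually_elim (use adm_pos[OF adm] in auto)

lemma mu0_int_id: "integrable (mu0 x) (\<lambda>v. v)" and mu0_integral_id: "integral\<^sup>L (mu0 x) (\<lambda>v. v) = M0"
proof -
  have m: "(\<lambda>v::real. v) \<in> borel_measurable (mu0 x)" by (simp add: mu0_eq)
  show int: "integrable (mu0 x) (\<lambda>v. v)"
    by (rule integrableI_nonneg[OF m]) (use mu0_AE_pos mu0_nn in \<open>auto elim: eventually_mono\<close>)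
  have "integral\<^sup>L (mu0 x) (\<lambda>v. v) = enn2real (\<integral>\<^sup>+ v. ennreal v \<partial>mu0 x)"
    by (rule integral_eq_nn_integral[OF m]) (use mu0_AE_pos in \<open>auto elim: eventually_mono\<close>)
  then show "integral\<^sup>L (mu0 x) (\<lambda>v. v) = M0" using mu0_nn M0_nonneg by simp
qed

lemma mu0_integral_fin:
  fixes f :: "real \<Rightarrow> real"
  assumes fm: "f \<in> borel_measurable borel" and fz: "\<And>i. i > n \<Longrightarrow> f (x i) = 0"
  shows "integral\<^sup>L (mu0 x) f = (\<Sum>i=1..n. (1/2) ^ i * f (x i))"
proof -
  have fz': "\<And>i. f (x i) \<noteq> 0 \<Longrightarrow> i \<le> n" using fz not_le by blast
  have "integral\<^sup>L (mu0 x) f = integral\<^sup>L D0 (\<lambda>k. f (x k))"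
    unfolding mu0_eq using fm by (intro integral_distr) auto
  also have "\<dots> = integral\<^sup>L (count_space UNIV) (\<lambda>k. w0 k *\<^sub>R f (x k))"
    by (rule integral_density) (use fm in \<open>auto simp: w0_nonneg\<close>)
  also have "\<dots> = (\<Sum>k | k \<in> UNIV \<and> w0 k *\<^sub>R f (x k) \<noteq> 0. w0 k *\<^sub>R f (x k))"
  proof (rule lebesgue_integral_count_space_finite_support)
    have "{k \<in> UNIV. w0 k *\<^sub>R f (x k) \<noteq> 0} \<subseteq> {1..n}"
      using fz' by (auto simp: w0_def split: if_splits)
    then show "finite {k \<in> UNIV. w0 k *\<^sub>R f (x k) \<noteq> 0}" by (rule finite_subset) simp
  qed
  also have "\<dots> = (\<Sum>k\<in>{1..n}. w0 k *\<^sub>R f (x k))"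
  proof (rule sum.mono_neutral_left)
    show "{k \<in> UNIV. w0 k *\<^sub>R f (x k) \<noteq> 0} \<subseteq> {1..n}"
      using fz' by (auto simp: w0_def split: if_splits)
  qed auto
  also have "\<dots> = (\<Sum>i=1..n. (1/2) ^ i * f (x i))"
    by (intro sum.cong) (auto simp: w0_def)
  finally show ?thesis .
qed

end


lemma coag_add: "coag_term x M (\<lambda>v. f v + g v) p = coag_term x M f p + coag_term x M g p"
  by (cases p) (simp add: coag_term_def algebra_simps)

lemma Kern_nz: assumes adm: "admissible_seq x" and "Kern x u w \<noteq> 0"
  shows "u > 0" "w > 0"
proof -
  have "nI x u \<ge> 1 \<and> nI x w \<ge> 1" using assms(2) by (auto simp: Kern_eq split: if_splits)
  then show "u > 0" "w > 0" using nI_pos[OF adm] by auto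
qed

context hyps begin

lemma sol_at: assumes "t \<ge> 0" "f \<in> test_fns"
  shows "integrable (mu t) f"
    and "AE s in lborel. s \<in> {0..t} \<longrightarrow> integrable (mu s \<Otimes>\<^sub>M mu s) (coag_term x (mu s) f)"
    and "set_integrable lborel {0..t} (\<lambda>s. \<integral>p. coag_term x (mu s) f p \<partial>(mu s \<Otimes>\<^sub>M mu s))"
    and "(\<integral>v. f v \<partial>mu t) = (\<integral>v. f v \<partial>mu0 x) +
             1/2 * (LINT s:{0..t}|lborel. (\<integral>p. coag_term x (mu s) f p \<partial>(mu s \<Otimes>\<^sub>M mu s)))"
  using sol assms unfolding smol_solution_def by blast+

lemma trunc_nonpos:
  fixes R :: real assumes R1: "R \<ge> 1"
  shows "coag_term x M (\<lambda>v. v * indicator {..1} v) p + coag_term x M (\<lambda>v. v * indicator {1<..R} v) p \<le> 0"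
proof (cases p)
  case (Pair u w)
  define T where "T v = v * indicator {..1} v + v * indicator {1<..R} v" for v :: real
  have T: "v > 0 \<Longrightarrow> T v = (if v \<le> R then v else 0)" for v
    using R1 by (auto simp: T_def indicator_def)
  have "coag_term x M (\<lambda>v. v * indicator {..1} v) p + coag_term x M (\<lambda>v. v * indicator {1<..R} v) p
      = (T (u + w) - T u - T w) * Kern x u w"
    unfolding Pair coag_term_def T_def by (simp add: algebra_simps)
  also have "\<dots> \<le> 0"
  proof (cases "Kern x u w = 0")
    case False
    then have u: "u > 0" and w: "w > 0" using Kern_nz[OF adm] by auto
    have "T (u + w) - T u - T w \<le> 0" using u w T[of u] T[of w] T[of "u+w"] by auto
    then show ?thesis using Kern_nonneg[of x u w] by (simp add: mult_nonpos_nonneg)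
  qed simp
  finally show ?thesis .
qed

lemma W1_R: assumes t0: "t \<ge> 0" and R1: "R \<ge> 1"
  shows "(\<integral>\<^sup>+ v. ennreal (v * indicator {0<..R} v) \<partial>mu t) \<le> ennreal M0"
proof -
  define f1 where "f1 v = v * indicator {..1} v" for v :: real
  define f2 where "f2 v = v * indicator {1<..R} v" for v :: real
  have f1t: "f1 \<in> test_fns" unfolding test_fns_def f1_def by simp
  have f2t: "f2 \<in> test_fns" unfolding test_fns_def
  proof (intro UnI1 CollectI conjI)
    show "f2 \<in> borel_measurable borel" unfolding f2_def by measurable
    show "bounded (range f2)" unfolding bounded_iff
      by (intro exI[of _ R]) (use R1 in \<open>auto simp: f2_def indicator_def\<close>)
    show "\<exists>B. compact B \<and> B \<subseteq> {0<..} \<and> (\<forall>v. v \<notin> B \<longrightarrow> f2 v = 0)"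
      by (intro exI[of _ "{1..R}"]) (auto simp: f2_def indicator_def)
  qed
  define C where "C f s = (\<integral>p. coag_term x (mu s) f p \<partial>(mu s \<Otimes>\<^sub>M mu s))" for f s
  note s1 = sol_at[OF t0 f1t, folded C_def] and s2 = sol_at[OF t0 f2t, folded C_def]
  have "(LINT s:{0..t}|lborel. C f1 s) + (LINT s:{0..t}|lborel. C f2 s) = (LINT s:{0..t}|lborel. C f1 s + C f2 s)"
    using set_integral_add(2)[OF s1(3) s2(3)] by simp
  also have "\<dots> \<le> 0"
  proof -
    have int: "integrable lborel (\<lambda>s. indicator {0..t} s * (C f1 s + C f2 s))"
      using set_integral_add(1)[OF s1(3) s2(3)] unfolding set_integrable_def by simp
    have "integral\<^sup>L lborel (\<lambda>s. indicator {0..t} s * (C f1 s + C f2 s)) \<le> integral\<^sup>L lborel (\<lambda>s::real. 0::real)"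
    proof (rule integral_mono_AE[OF int])
      show "integrable lborel (\<lambda>s::real. 0::real)" by simp
      show "AE s in lborel. indicator {0..t} s * (C f1 s + C f2 s) \<le> 0"
        using s1(2) s2(2)
      proof eventually_elim
        case (elim s)
        show ?case
        proof (cases "s \<in> {0..t}")
          case True
          then have i1: "integrable (mu s \<Otimes>\<^sub>M mu s) (coag_term x (mu s) f1)"
            and i2: "integrable (mu s \<Otimes>\<^sub>M mu s) (coag_term x (mu s) f2)" using elim by auto
          have "C f1 s + C f2 s = (\<integral>p. coag_term x (mu s) f1 p + coag_term x (mu s) f2 p \<partial>(mu s \<Otimes>\<^sub>M mu s))"
            unfolding C_def by (rule Bochner_Integration.integral_add[OF i1 i2, symmetric])
          also have "\<dots> \<le> (\<integral>p. 0 \<partial>(mu s \<Otimes>\<^sub>M mu s))"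
          proof (rule integral_mono[OF Bochner_Integration.integrable_add[OF i1 i2]])
            fix p show "coag_term x (mu s) f1 p + coag_term x (mu s) f2 p \<le> 0"
              using trunc_nonpos[OF R1, of "mu s" p] unfolding f1_def[abs_def] f2_def[abs_def] .
          qed simp
          finally show ?thesis using True by simp
        qed simp
      qed
    qed
    then show ?thesis unfolding set_lebesgue_integral_def by simp
  qed
  finally have Cneg: "(LINT s:{0..t}|lborel. C f1 s) + (LINT s:{0..t}|lborel. C f2 s) \<le> 0" .
  have f1m: "f1 \<in> borel_measurable (mu0 x)"
  proof -
    have "f1 \<in> borel_measurable borel" unfolding f1_def[abs_def] by measurable
    then show ?thesis by (simp add: mu0_eq)
  qed
  have f2m: "f2 \<in> borel_measurable (mu0 x)"
  proof -
    have "f2 \<in> borel_measurable borel" unfolding f2_def[abs_def] by measurable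
    then show ?thesis by (simp add: mu0_eq)
  qed
  have m0i1: "integrable (mu0 x) f1"
    by (rule Bochner_Integration.integrable_bound[OF mu0_int_id f1m]) (auto simp: f1_def indicator_def)
  have m0i2: "integrable (mu0 x) f2"
    by (rule Bochner_Integration.integrable_bound[OF mu0_int_id f2m]) (auto simp: f2_def indicator_def)
  have "(\<integral>v. f1 v \<partial>mu0 x) + (\<integral>v. f2 v \<partial>mu0 x) = (\<integral>v. f1 v + f2 v \<partial>mu0 x)"
    by (rule Bochner_Integration.integral_add[OF m0i1 m0i2, symmetric])
  also have "\<dots> \<le> (\<integral>v. v \<partial>mu0 x)"
  proof (rule integral_mono_AE)
    show "integrable (mu0 x) (\<lambda>v. f1 v + f2 v)" using m0i1 m0i2 by auto
    show "integrable (mu0 x) (\<lambda>v. v)" by (rule mu0_int_id)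
    show "AE v in mu0 x. f1 v + f2 v \<le> v"
      using mu0_AE_pos by eventually_elim (auto simp: f1_def f2_def indicator_def)
  qed
  also have "\<dots> = M0" by (rule mu0_integral_id)
  finally have m0le: "(\<integral>v. f1 v \<partial>mu0 x) + (\<integral>v. f2 v \<partial>mu0 x) \<le> M0" .
  have "(\<integral>v. f1 v + f2 v \<partial>mu t) = (\<integral>v. f1 v \<partial>mu t) + (\<integral>v. f2 v \<partial>mu t)"
    by (rule Bochner_Integration.integral_add[OF s1(1) s2(1)])
  also have "\<dots> = (\<integral>v. f1 v \<partial>mu0 x) + (\<integral>v. f2 v \<partial>mu0 x)
      + 1/2 * ((LINT s:{0..t}|lborel. C f1 s) + (LINT s:{0..t}|lborel. C f2 s))"
    using s1(4) s2(4) by (simp add: algebra_simps)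
  also have "\<dots> \<le> M0"
  proof -
    have aux: "\<And>a b M::real. a \<le> M \<Longrightarrow> b \<le> 0 \<Longrightarrow> a + 1/2 * b \<le> M" by linarith
    show ?thesis by (rule aux[OF m0le Cneg])
  qed
  finally have intle: "(\<integral>v. f1 v + f2 v \<partial>mu t) \<le> M0" .
  have "(\<integral>\<^sup>+ v. ennreal (v * indicator {0<..R} v) \<partial>mu t) = (\<integral>\<^sup>+ v. ennreal (f1 v + f2 v) \<partial>mu t)"
    by (rule nn_integral_cong_AE)
       (use mu_AE_pos[OF t0] in \<open>eventually_elim, use R1 in \<open>auto simp: f1_def f2_def indicator_def\<close>\<close>)
  also have "\<dots> = ennreal (\<integral>v. f1 v + f2 v \<partial>mu t)"
  proof (rule nn_integral_eq_integral)
    show "integrable (mu t) (\<lambda>v. f1 v + f2 v)" using s1(1) s2(1) by auto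
    show "AE v in mu t. 0 \<le> f1 v + f2 v"
      using mu_AE_pos[OF t0] by eventually_elim (auto simp: f1_def f2_def indicator_def)
  qed
  also have "\<dots> \<le> ennreal M0" using intle by (rule ennreal_leI)
  finally show ?thesis .
qed

lemma W1: assumes t0: "t \<ge> 0" shows "(\<integral>\<^sup>+ v. ennreal v \<partial>mu t) \<le> ennreal M0"
proof -
  define F where "F j v = ennreal (v * indicator {0<..real (Suc j)} v)" for j v
  have pw: "ennreal v = (SUP j. F j v)" for v
  proof (cases "v > 0")
    case False
    then have "F j v = 0" for j by (auto simp: F_def indicator_def ennreal_eq_0_iff)
    then show ?thesis using False by (simp add: ennreal_eq_0_iff)
  next
    case True
    show ?thesis
    proof (rule antisym)
      obtain n :: nat where "v \<le> real n" using real_arch_simple[of v] by blast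
      then have j: "v \<le> real (Suc n)" by simp
      have "ennreal v = F n v" using True j by (simp add: F_def indicator_def)
      then show "ennreal v \<le> (SUP j. F j v)" by (metis SUP_upper UNIV_I)
      show "(SUP j. F j v) \<le> ennreal v"
        by (rule SUP_least) (use True in \<open>auto simp: F_def indicator_def\<close>)
    qed
  qed
  have inc: "incseq F"
    unfolding incseq_def le_fun_def F_def
    by (auto simp: indicator_def intro!: ennreal_leI)
  have "(\<integral>\<^sup>+ v. ennreal v \<partial>mu t) = (\<integral>\<^sup>+ v. (SUP j. F j v) \<partial>mu t)" using pw by simp
  also have "\<dots> = (SUP j. integral\<^sup>N (mu t) (F j))"
  proof (rule nn_integral_monotone_convergence_SUP[OF inc])
    fix j show "F j \<in> borel_measurable (mu t)"
      unfolding F_def using mu_sets[OF t0] by (subst measurable_cong_sets[of _ borel _ borel]) auto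
  qed
  also have "\<dots> \<le> ennreal M0"
  proof (rule SUP_least)
    fix j :: nat
    have "integral\<^sup>N (mu t) (F j) = (\<integral>\<^sup>+ v. ennreal (v * indicator {0<..real (Suc j)} v) \<partial>mu t)"
      unfolding F_def[abs_def] ..
    also have "\<dots> \<le> ennreal M0" by (rule W1_R[OF t0]) simp
    finally show "integral\<^sup>N (mu t) (F j) \<le> ennreal M0" .
  qed
  finally show ?thesis .
qed

lemma mass_int: assumes t0: "t \<ge> 0" shows "integrable (mu t) (\<lambda>v. v)"
proof (rule integrableI_bounded)
  show "(\<lambda>v::real. v) \<in> borel_measurable (mu t)" using mu_sets[OF t0] by (subst measurable_cong_sets[of _ borel _ borel]) auto
  have "(\<integral>\<^sup>+ v. ennreal (norm v) \<partial>mu t) = (\<integral>\<^sup>+ v. ennreal v \<partial>mu t)"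
    by (rule nn_integral_cong_AE) (use mu_AE_pos[OF t0] in \<open>eventually_elim, auto\<close>)
  also have "\<dots> < \<infinity>" using W1[OF t0] by (simp add: le_less_trans)
  finally show "(\<integral>\<^sup>+ v. ennreal (norm v) \<partial>mu t) < \<infinity>" .
qed

lemma mass_int_le: assumes t0: "t \<ge> 0" shows "integral\<^sup>L (mu t) (\<lambda>v. v) \<le> M0"
proof -
  have "ennreal (integral\<^sup>L (mu t) (\<lambda>v. v)) = (\<integral>\<^sup>+ v. ennreal v \<partial>mu t)"
    by (rule nn_integral_eq_integral[OF mass_int[OF t0], symmetric]) (use mu_AE_pos[OF t0] in \<open>eventually_elim, auto\<close>)
  also have "\<dots> \<le> ennreal M0" by (rule W1[OF t0])
  finally show ?thesis using M0_nonneg by simp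
qed

end


lemma eventually_window: assumes "v > 0"
  shows "eventually (\<lambda>j. v \<in> {1 / real (Suc j)..real (Suc j)}) sequentially"
proof -
  define N where "N = nat \<lceil>max v (1/v)\<rceil>"
  have "v \<in> {1 / real (Suc j)..real (Suc j)}" if j: "j \<ge> N" for j
  proof -
    have k1: "real (Suc j) \<ge> v" using j unfolding N_def by linarith
    have k2: "real (Suc j) \<ge> 1 / v" using j unfolding N_def by linarith
    have "1 / real (Suc j) \<le> v" using k2 assms by (simp add: field_simps)
    then show ?thesis using k1 by simp
  qed
  then show ?thesis unfolding eventually_sequentially by blast
qed

context hyps begin

definition Lr :: "nat \<Rightarrow> real set" where "Lr n = {v. 1 \<le> nI x v \<and> nI x v \<le> n}"
definition G :: "nat \<Rightarrow> real \<Rightarrow> real" where "G n v = v * indicator (Lr n) v"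
definition gj :: "nat \<Rightarrow> nat \<Rightarrow> real \<Rightarrow> real" where
  "gj n j v = G n v * indicator {1 / real (Suc j)..real (Suc j)} v"
definition Mn :: "nat \<Rightarrow> real \<Rightarrow> real" where "Mn n t = (\<integral>v. G n v \<partial>mu t)"
definition An :: "nat \<Rightarrow> real \<Rightarrow> real" where "An n s = (\<integral>v. v * indicator {v. nI x v = n} v \<partial>mu s)"
definition Sn :: "nat \<Rightarrow> real" where "Sn n = (\<Sum>i=1..n. (1/2) ^ i * x i)"
definition hj :: "nat \<Rightarrow> nat \<Rightarrow> real \<Rightarrow> real" where
  "hj n j s = - (1/2) * (\<integral>p. coag_term x (mu s) (gj n j) p \<partial>(mu s \<Otimes>\<^sub>M mu s))"
definition \<psi> :: "nat \<Rightarrow> real \<Rightarrow> real" where "\<psi> n s = 8 ^ n * An n s * mplus (Suc n) s"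

lemma Lr_meas[measurable]: "Lr n \<in> sets borel"
  unfolding Lr_def by (rule Lrange_meas)

lemma G_meas[measurable]: "G n \<in> borel_measurable borel"
  unfolding G_def[abs_def] by measurable

lemma gj_meas[measurable]: "gj n j \<in> borel_measurable borel"
  unfolding gj_def[abs_def] by measurable

lemma Lr_pos: "v \<in> Lr n \<Longrightarrow> v > 0"
  unfolding Lr_def using nI_pos[OF adm] by auto

lemma G_nonneg: "G n v \<ge> 0"
  using Lr_pos[of v n] by (auto simp: G_def indicator_def)

lemma G_le: "G n v \<le> max 0 v"
  by (auto simp: G_def indicator_def)

lemma gj_abs: "\<bar>gj n j v\<bar> \<le> G n v"
  using G_nonneg[of n v] by (auto simp: gj_def indicator_def)

lemma gj_lim: "(\<lambda>j. gj n j v) \<longlonglongrightarrow> G n v"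
proof (cases "v > 0")
  case True
  have "eventually (\<lambda>j. gj n j v = G n v) sequentially"
    using eventually_window[OF True] by eventually_elim (simp add: gj_def)
  then show ?thesis by (rule tendsto_eventually)
next
  case False
  then have "v \<notin> Lr n" using Lr_pos by auto
  then show ?thesis by (simp add: gj_def G_def)
qed

lemma gj_test: "gj n j \<in> test_fns"
  unfolding test_fns_def
proof (intro UnI1 CollectI conjI)
  show "gj n j \<in> borel_measurable borel" by (rule gj_meas)
  show "bounded (range (gj n j))" unfolding bounded_iff
  proof (intro exI[of _ "real (Suc j)"] ballI)
    fix y assume "y \<in> range (gj n j)"
    then obtain v where y: "y = gj n j v" by auto
    show "norm y \<le> real (Suc j)"
    proof (cases "v \<in> {1 / real (Suc j)..real (Suc j)}")
      case True
      have "\<bar>gj n j v\<bar> \<le> G n v" by (rule gj_abs)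
      also have "G n v \<le> max 0 v" by (rule G_le)
      also have "\<dots> \<le> real (Suc j)" using True by auto
      finally show ?thesis using y by simp
    qed (simp add: y gj_def)
  qed
  show "\<exists>B. compact B \<and> B \<subseteq> {0<..} \<and> (\<forall>v. v \<notin> B \<longrightarrow> gj n j v = 0)"
  proof (intro exI[of _ "{1 / real (Suc j)..real (Suc j)}"] conjI)
    show "{1 / real (Suc j)..real (Suc j)} \<subseteq> {0<..}"
      by (auto intro: less_le_trans[of 0 "1 / real (Suc j)"])
  qed (auto simp: gj_def)
qed

lemma meas_mu: "t \<ge> 0 \<Longrightarrow> f \<in> borel_measurable borel \<Longrightarrow> f \<in> borel_measurable (mu t)"
  using measurable_cong_sets[OF mu_sets refl] by blast

lemma G_int: assumes t0: "t \<ge> 0" shows "integrable (mu t) (G n)"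
proof (rule Bochner_Integration.integrable_bound[OF mass_int[OF t0]])
  show "G n \<in> borel_measurable (mu t)" by (rule meas_mu[OF t0 G_meas])
  have "norm (G n v) \<le> norm v" for v using G_nonneg[of n v] G_le[of n v] by simp
  then show "AE v in mu t. norm (G n v) \<le> norm v" by simp
qed

end


context hyps begin

lemma lim_mu: assumes t0: "t \<ge> 0" shows "(\<lambda>j. \<integral>v. gj n j v \<partial>mu t) \<longlonglongrightarrow> Mn n t"
proof -
  have f1: "G n \<in> borel_measurable (mu t)" by (rule meas_mu[OF t0 G_meas])
  have f2: "\<And>j. gj n j \<in> borel_measurable (mu t)" by (rule meas_mu[OF t0 gj_meas])
  have f3: "integrable (mu t) (G n)" by (rule G_int[OF t0])
  have f4: "AE v in mu t. (\<lambda>j. gj n j v) \<longlonglongrightarrow> G n v" using gj_lim by simp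
  have f5: "\<And>j. AE v in mu t. norm (gj n j v) \<le> G n v" using gj_abs by simp
  show ?thesis using integral_dominated_convergence[OF f1 f2 f3 f4 f5] by (simp add: Mn_def)
qed

lemma x_in_Lr: "1 \<le> i \<Longrightarrow> i \<le> n \<Longrightarrow> x i \<in> Lr n"
  using nI_x[OF adm, of i] by (simp add: Lr_def)

lemma x_notin_Lr: "n < i \<Longrightarrow> x i \<notin> Lr n"
  using nI_x[OF adm, of i] by (simp add: Lr_def)

lemma lim_mu0: "(\<lambda>j. \<integral>v. gj n j v \<partial>mu0 x) \<longlonglongrightarrow> Sn n"
proof -
  have eq: "(\<integral>v. gj n j v \<partial>mu0 x) = (\<Sum>i=1..n. (1/2) ^ i * gj n j (x i))" for j
    by (rule mu0_integral_fin[OF gj_meas]) (simp add: gj_def G_def x_notin_Lr)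
  have "(\<lambda>j. \<Sum>i=1..n. (1/2) ^ i * gj n j (x i)) \<longlonglongrightarrow> (\<Sum>i=1..n. (1/2) ^ i * G n (x i))"
    by (intro tendsto_sum tendsto_mult tendsto_const gj_lim)
  moreover have "(\<Sum>i=1..n. (1/2) ^ i * G n (x i)) = Sn n"
    unfolding Sn_def by (intro sum.cong refl) (simp add: G_def x_in_Lr)
  ultimately show ?thesis by (simp add: eq)
qed

lemma hj_int: assumes t0: "t \<ge> 0" shows "set_integrable lborel {0..t} (hj n j)"
proof -
  have "set_integrable lborel {0..t} (\<lambda>s. - (1/2) * (\<integral>p. coag_term x (mu s) (gj n j) p \<partial>(mu s \<Otimes>\<^sub>M mu s)))"
    using sol_at(3)[OF t0 gj_test] by (intro set_integrable_mult_right) auto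
  then show ?thesis unfolding hj_def[abs_def] .
qed

lemma hj_lint: assumes t0: "t \<ge> 0"
  shows "(LINT s:{0..t}|lborel. hj n j s) = (\<integral>v. gj n j v \<partial>mu0 x) - (\<integral>v. gj n j v \<partial>mu t)"
proof -
  have "(LINT s:{0..t}|lborel. hj n j s) = - (1/2) * (LINT s:{0..t}|lborel. (\<integral>p. coag_term x (mu s) (gj n j) p \<partial>(mu s \<Otimes>\<^sub>M mu s)))"
    unfolding hj_def by (rule set_integral_mult_right)
  then show ?thesis using sol_at(4)[OF t0 gj_test, of n j] by simp
qed

lemma lim_hj: assumes t0: "t \<ge> 0"
  shows "(\<lambda>j. LINT s:{0..t}|lborel. hj n j s) \<longlonglongrightarrow> Sn n - Mn n t"
  unfolding hj_lint[OF t0] by (intro tendsto_diff lim_mu0 lim_mu[OF t0])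

end


context hyps begin

definition H :: "nat \<Rightarrow> real \<times> real \<Rightarrow> real" where
  "H n p = - (8 ^ n) * ((fst p * indicator {v. nI x v = n} (fst p)) * indicator {v. nI x v = Suc n} (snd p))
           - 8 ^ n * (indicator {v. nI x v = Suc n} (fst p) * (snd p * indicator {v. nI x v = n} (snd p)))"

definition W :: "nat \<Rightarrow> real \<times> real \<Rightarrow> real" where
  "W n p = 2 * 8 ^ n * ((fst p * indicator (Lr (Suc n)) (fst p)) * indicator (Lr (Suc n)) (snd p))
         + 2 * 8 ^ n * (indicator (Lr (Suc n)) (fst p) * (snd p * indicator (Lr (Suc n)) (snd p)))"

lemma W_nonneg: "W n p \<ge> 0"
  using Lr_pos[of "fst p" "Suc n"] Lr_pos[of "snd p" "Suc n"]
  by (auto simp: W_def indicator_def)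

lemma coag_G: assumes n1: "n \<ge> 1" shows "coag_term x M (G n) (u, w) = H n (u, w)"
proof -
  define a where "a = nI x u"
  define b where "b = nI x w"
  consider (A) "a \<ge> 1 \<and> b = Suc a" | (B) "b \<ge> 1 \<and> a = Suc b" | (C) "\<not> (a \<ge> 1 \<and> b = Suc a)" "\<not> (b \<ge> 1 \<and> a = Suc b)"
    by blast
  then show ?thesis
  proof cases
    case A
    have K: "Kern x u w = 8 ^ a" using A by (simp add: Kern_eq a_def b_def)
    have s: "nI x (u + w) = Suc a" using nI_sum[OF adm, of u a w] A by (simp add: a_def b_def)
    show ?thesis using A n1 unfolding coag_term_def H_def G_def Lr_def
      by (auto simp: K s a_def[symmetric] b_def[symmetric] indicator_def)
  next
    case B
    have K: "Kern x u w = 8 ^ b" using B by (simp add: Kern_eq a_def b_def)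
    have s: "nI x (u + w) = Suc b" using nI_sum[OF adm, of w b u] B by (simp add: a_def b_def add.commute)
    show ?thesis using B n1 unfolding coag_term_def H_def G_def Lr_def
      by (auto simp: K s a_def[symmetric] b_def[symmetric] indicator_def)
  next
    case C
    have K: "Kern x u w = 0" using C by (auto simp: Kern_eq a_def b_def)
    show ?thesis using C n1 unfolding coag_term_def H_def
      by (auto simp: K a_def[symmetric] b_def[symmetric] indicator_def)
  qed
qed

lemma coag_bound_gen:
  assumes n1: "n \<ge> 1" and fb: "\<And>v. \<bar>f v\<bar> \<le> G n v"
  shows "\<bar>coag_term x M f (u, w)\<bar> \<le> W n (u, w)"
proof (cases "Kern x u w = 0")
  case True
  then show ?thesis using W_nonneg[of n "(u,w)"] by (simp add: coag_term_def)
next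
  case False
  have u0: "u > 0" and w0: "w > 0" using Kern_nz[OF adm False] by auto
  obtain m where m: "m \<ge> 1" "(nI x u = m \<and> nI x w = Suc m) \<or> (nI x w = m \<and> nI x u = Suc m)"
    and K: "Kern x u w = 8 ^ m"
    using False by (auto simp: Kern_eq split: if_splits)
  have s: "nI x (u + w) = Suc m"
    using m nI_sum[OF adm, of u m w] nI_sum[OF adm, of w m u] by (auto simp: add.commute)
  show ?thesis
  proof (cases "m \<le> n")
    case False
    then have "G n u = 0" "G n w = 0" "G n (u + w) = 0" using m s by (auto simp: G_def Lr_def)
    then have "f u = 0" "f w = 0" "f (u + w) = 0" using fb[of u] fb[of w] fb[of "u+w"] by auto
    then show ?thesis using W_nonneg[of n "(u,w)"] by (simp add: coag_term_def)
  next
    case True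
    have cu: "u \<in> Lr (Suc n)" and cw: "w \<in> Lr (Suc n)" using m True by (auto simp: Lr_def)
    have W: "W n (u, w) = 2 * 8 ^ n * (u + w)" using cu cw by (simp add: W_def algebra_simps)
    have "\<bar>f (u + w) - f u - f w\<bar> \<le> G n (u + w) + G n u + G n w"
      using fb[of u] fb[of w] fb[of "u+w"] by linarith
    also have "\<dots> \<le> 2 * (u + w)" using G_le[of n u] G_le[of n w] G_le[of n "u+w"] u0 w0 by simp
    finally have d: "\<bar>f (u + w) - f u - f w\<bar> \<le> 2 * (u + w)" .
    have k: "(8::real) ^ m \<le> 8 ^ n" using True by (intro power_increasing) auto
    have "\<bar>coag_term x M f (u, w)\<bar> = \<bar>f (u + w) - f u - f w\<bar> * 8 ^ m"
      by (simp add: coag_term_def K abs_mult)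
    also have "\<dots> \<le> (2 * (u + w)) * 8 ^ n"
      by (rule mult_mono[OF d k]) (use u0 w0 in auto)
    finally show ?thesis using W by (simp add: algebra_simps)
  qed
qed

lemma pair_meas: assumes s0: "s \<ge> 0" and f: "f \<in> borel_measurable (borel \<Otimes>\<^sub>M borel)"
  shows "f \<in> borel_measurable (mu s \<Otimes>\<^sub>M mu s)"
  using f measurable_cong_sets[OF sets_pair_measure_cong[OF mu_sets[OF s0] mu_sets[OF s0]] refl] by blast

lemma vc_int: assumes s0: "s \<ge> 0" and A: "A \<in> sets borel"
  shows "integrable (mu s) (\<lambda>v. v * indicator A v)"
proof (rule Bochner_Integration.integrable_bound[OF mass_int[OF s0]])
  show "(\<lambda>v. v * indicator A v) \<in> borel_measurable (mu s)" by (rule meas_mu[OF s0]) (use A in measurable)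
  show "AE v in mu s. norm (v * indicator A v) \<le> norm v" by (auto simp: indicator_def)
qed

lemma vc_le: assumes s0: "s \<ge> 0" and A: "A \<in> sets borel"
  shows "(\<integral>v. v * indicator A v \<partial>mu s) \<le> M0"
proof -
  have "(\<integral>v. v * indicator A v \<partial>mu s) \<le> (\<integral>v. v \<partial>mu s)"
    by (rule integral_mono_AE[OF vc_int[OF s0 A] mass_int[OF s0]])
       (use mu_AE_pos[OF s0] in \<open>eventually_elim, auto simp: indicator_def\<close>)
  also have "\<dots> \<le> M0" by (rule mass_int_le[OF s0])
  finally show ?thesis .
qed

lemma ind_int: assumes s0: "s \<ge> 0" and A: "A \<in> sets borel" and fin: "emeasure (mu s) A < \<infinity>"
  shows "integrable (mu s) (indicator A :: real \<Rightarrow> real)" and "(\<integral>v. indicator A v \<partial>mu s) = measure (mu s) A"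
  using A fin mu_sets[OF s0] by (auto intro: integrable_real_indicator)

lemma Lr_fin: "s \<ge> 0 \<Longrightarrow> emeasure (mu s) (Lr n) < \<infinity>"
  using Lrange_fin[of s n] unfolding Lr_def by (auto simp: le_less_trans)

lemma Lr_measure: assumes s0: "s \<ge> 0" shows "measure (mu s) (Lr n) \<le> real n"
proof -
  have "emeasure (mu s) (Lr n) \<le> ennreal (real n)" using Lrange_fin[OF s0, of n] by (simp add: Lr_def)
  then show ?thesis using Lr_fin[OF s0, of n] by (simp add: measure_def enn2real_leI)
qed

lemma lev_measure: assumes "m \<ge> 1" "s \<ge> 0" shows "measure (mu s) {v. nI x v = m} = mplus m s"
  using levels assms mplus_nonneg[OF assms] by (simp add: measure_def)

lemma W_int: assumes s0: "s \<ge> 0"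
  shows "integrable (mu s \<Otimes>\<^sub>M mu s) (W n)"
    and "integral\<^sup>L (mu s \<Otimes>\<^sub>M mu s) (W n) \<le> 4 * 8 ^ n * M0 * real (Suc n)"
proof -
  note sf = mu_sf[OF s0]
  have i1: "integrable (mu s) (\<lambda>v. v * indicator (Lr (Suc n)) v)" by (rule vc_int[OF s0]) simp
  have i2: "integrable (mu s) (indicator (Lr (Suc n)) :: real \<Rightarrow> real)"
    by (rule ind_int(1)[OF s0 _ Lr_fin[OF s0]]) simp
  note p1 = prod_sep[OF sf sf i1 i2] and p2 = prod_sep[OF sf sf i2 i1]
  have Weq: "W n = (\<lambda>p. 2 * 8 ^ n * ((fst p * indicator (Lr (Suc n)) (fst p)) * indicator (Lr (Suc n)) (snd p))
         + 2 * 8 ^ n * (indicator (Lr (Suc n)) (fst p) * (snd p * indicator (Lr (Suc n)) (snd p))))"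
    by (simp add: W_def[abs_def])
  show int: "integrable (mu s \<Otimes>\<^sub>M mu s) (W n)"
    unfolding Weq using p1(1) p2(1) by auto
  have "integral\<^sup>L (mu s \<Otimes>\<^sub>M mu s) (W n) =
     2 * 8 ^ n * ((\<integral>v. v * indicator (Lr (Suc n)) v \<partial>mu s) * measure (mu s) (Lr (Suc n)))
     + 2 * 8 ^ n * (measure (mu s) (Lr (Suc n)) * (\<integral>v. v * indicator (Lr (Suc n)) v \<partial>mu s))"
    unfolding Weq using p1 p2 ind_int(2)[OF s0 _ Lr_fin[OF s0], of "Suc n"] by simp
  also have "\<dots> = 4 * 8 ^ n * ((\<integral>v. v * indicator (Lr (Suc n)) v \<partial>mu s) * measure (mu s) (Lr (Suc n)))"
    by (simp add: algebra_simps)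
  also have "\<dots> \<le> 4 * 8 ^ n * (M0 * real (Suc n))"
  proof (intro mult_left_mono mult_mono)
    show "(\<integral>v. v * indicator (Lr (Suc n)) v \<partial>mu s) \<le> M0" by (rule vc_le[OF s0]) simp
    show "measure (mu s) (Lr (Suc n)) \<le> real (Suc n)" by (rule Lr_measure[OF s0])
    show "0 \<le> M0" by (rule M0_nonneg)
    show "0 \<le> measure (mu s) (Lr (Suc n))" by simp
  qed simp
  finally show "integral\<^sup>L (mu s \<Otimes>\<^sub>M mu s) (W n) \<le> 4 * 8 ^ n * M0 * real (Suc n)" by simp
qed

lemma H_int: assumes s0: "s \<ge> 0" and n1: "n \<ge> 1"
  shows "integral\<^sup>L (mu s \<Otimes>\<^sub>M mu s) (H n) = - (2 * 8 ^ n * An n s * mplus (Suc n) s)"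
proof -
  note sf = mu_sf[OF s0]
  have i1: "integrable (mu s) (\<lambda>v. v * indicator {v. nI x v = n} v)" by (rule vc_int[OF s0]) simp
  have fin: "emeasure (mu s) {v. nI x v = Suc n} < \<infinity>" using level_fin[of "Suc n" s] s0 by simp
  have i2: "integrable (mu s) (indicator {v. nI x v = Suc n} :: real \<Rightarrow> real)"
    by (rule ind_int(1)[OF s0 _ fin]) simp
  have m: "(\<integral>v. indicator {v. nI x v = Suc n} v \<partial>mu s) = mplus (Suc n) s"
    using ind_int(2)[OF s0 _ fin] lev_measure[of "Suc n" s] s0 by simp
  note p1 = prod_sep[OF sf sf i1 i2] and p2 = prod_sep[OF sf sf i2 i1]
  have Heq: "H n = (\<lambda>p. - (8 ^ n) * ((fst p * indicator {v. nI x v = n} (fst p)) * indicator {v. nI x v = Suc n} (snd p))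
           - 8 ^ n * (indicator {v. nI x v = Suc n} (fst p) * (snd p * indicator {v. nI x v = n} (snd p))))"
    by (simp add: H_def[abs_def])
  have "integral\<^sup>L (mu s \<Otimes>\<^sub>M mu s) (H n) = - (8 ^ n) * (An n s * mplus (Suc n) s) - 8 ^ n * (mplus (Suc n) s * An n s)"
    unfolding Heq using p1 p2 m by (simp add: An_def)
  then show ?thesis by (simp add: algebra_simps)
qed

definition Cb :: "nat \<Rightarrow> real" where "Cb n = 2 * 8 ^ n * M0 * real (Suc n)"

lemma pw_lim:
  assumes s0: "s \<ge> 0" and n1: "n \<ge> 1"
    and ints: "\<And>j. integrable (mu s \<Otimes>\<^sub>M mu s) (coag_term x (mu s) (gj n j))"
  shows "(\<lambda>j. hj n j s) \<longlonglongrightarrow> \<psi> n s" and "\<And>j. \<bar>hj n j s\<bar> \<le> Cb n"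
proof -
  have Hm: "H n \<in> borel_measurable (mu s \<Otimes>\<^sub>M mu s)"
    by (rule pair_meas[OF s0]) (unfold H_def[abs_def], measurable)
  have ceq: "coag_term x (mu s) (G n) = H n" using coag_G[OF n1] by (auto simp: fun_eq_iff)
  have f1: "coag_term x (mu s) (G n) \<in> borel_measurable (mu s \<Otimes>\<^sub>M mu s)" using Hm ceq by simp
  have f2: "\<And>j. coag_term x (mu s) (gj n j) \<in> borel_measurable (mu s \<Otimes>\<^sub>M mu s)" using ints by auto
  have f3: "integrable (mu s \<Otimes>\<^sub>M mu s) (W n)" by (rule W_int(1)[OF s0])
  have f4: "AE p in mu s \<Otimes>\<^sub>M mu s. (\<lambda>j. coag_term x (mu s) (gj n j) p) \<longlonglongrightarrow> coag_term x (mu s) (G n) p"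
  proof (intro AE_I2)
    fix p :: "real \<times> real"
    obtain u w where p: "p = (u, w)" by (cases p)
    show "(\<lambda>j. coag_term x (mu s) (gj n j) p) \<longlonglongrightarrow> coag_term x (mu s) (G n) p"
      unfolding p coag_term_def by (simp, intro tendsto_mult tendsto_diff gj_lim tendsto_const)
  qed
  have f5: "\<And>j. AE p in mu s \<Otimes>\<^sub>M mu s. norm (coag_term x (mu s) (gj n j) p) \<le> W n p"
  proof (intro AE_I2)
    fix j and p :: "real \<times> real"
    obtain u w where p: "p = (u, w)" by (cases p)
    show "norm (coag_term x (mu s) (gj n j) p) \<le> W n p"
      unfolding p using coag_bound_gen[OF n1 gj_abs] by simp
  qed
  have lim: "(\<lambda>j. integral\<^sup>L (mu s \<Otimes>\<^sub>M mu s) (coag_term x (mu s) (gj n j))) \<longlonglongrightarrow> integral\<^sup>L (mu s \<Otimes>\<^sub>M mu s) (coag_term x (mu s) (G n))"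
    by (rule integral_dominated_convergence[OF f1 f2 f3 f4 f5])
  then have "(\<lambda>j. - (1/2) * integral\<^sup>L (mu s \<Otimes>\<^sub>M mu s) (coag_term x (mu s) (gj n j))) \<longlonglongrightarrow> - (1/2) * integral\<^sup>L (mu s \<Otimes>\<^sub>M mu s) (H n)"
    unfolding ceq by (intro tendsto_mult tendsto_const)
  then show "(\<lambda>j. hj n j s) \<longlonglongrightarrow> \<psi> n s"
    unfolding hj_def \<psi>_def H_int[OF s0 n1] by (simp add: mult.assoc)
  fix j
  have "\<bar>integral\<^sup>L (mu s \<Otimes>\<^sub>M mu s) (coag_term x (mu s) (gj n j))\<bar> \<le> integral\<^sup>L (mu s \<Otimes>\<^sub>M mu s) (\<lambda>p. norm (coag_term x (mu s) (gj n j) p))"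
    using integral_norm_bound[of "mu s \<Otimes>\<^sub>M mu s" "coag_term x (mu s) (gj n j)"] by simp
  also have "\<dots> \<le> integral\<^sup>L (mu s \<Otimes>\<^sub>M mu s) (W n)"
    by (rule integral_mono_AE[OF _ f3 f5]) (use ints in auto)
  also have "\<dots> \<le> 4 * 8 ^ n * M0 * real (Suc n)" by (rule W_int(2)[OF s0])
  finally show "\<bar>hj n j s\<bar> \<le> Cb n" unfolding hj_def Cb_def by (simp add: abs_mult)
qed

end


context hyps begin

lemma AE_ints: assumes t0: "t \<ge> 0"
  shows "AE s in lborel. s \<in> {0..t} \<longrightarrow> (\<forall>j. integrable (mu s \<Otimes>\<^sub>M mu s) (coag_term x (mu s) (gj n j)))"
proof -
  have "\<forall>j. AE s in lborel. s \<in> {0..t} \<longrightarrow> integrable (mu s \<Otimes>\<^sub>M mu s) (coag_term x (mu s) (gj n j))"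
    using sol_at(2)[OF t0 gj_test] by blast
  then have "AE s in lborel. \<forall>j. s \<in> {0..t} \<longrightarrow> integrable (mu s \<Otimes>\<^sub>M mu s) (coag_term x (mu s) (gj n j))"
    by (subst AE_all_countable) 
  then show ?thesis by eventually_elim blast
qed

lemma AE_conv: assumes t0: "t \<ge> 0" and n1: "n \<ge> 1"
  shows "AE s in lborel. s \<in> {0..t} \<longrightarrow> (\<lambda>j. hj n j s) \<longlonglongrightarrow> \<psi> n s"
  using AE_ints[OF t0, of n] by eventually_elim (use pw_lim(1)[OF _ n1] in auto)

lemma AE_bnd: assumes t0: "t \<ge> 0" and n1: "n \<ge> 1"
  shows "AE s in lborel. s \<in> {0..t} \<longrightarrow> \<bar>hj n j s\<bar> \<le> Cb n"
  using AE_ints[OF t0, of n] by eventually_elim (use pw_lim(2)[OF _ n1] in auto)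

lemma An_nonneg: assumes s0: "s \<ge> 0" shows "An n s \<ge> 0"
  unfolding An_def by (rule integral_nonneg_AE) (use mu_AE_pos[OF s0] in \<open>eventually_elim, auto simp: indicator_def\<close>)

lemma psi_nonneg: "s \<ge> 0 \<Longrightarrow> n \<ge> 1 \<Longrightarrow> \<psi> n s \<ge> 0"
  unfolding \<psi>_def using An_nonneg[of s n] mplus_nonneg[of "Suc n" s] by simp

lemma F_nonneg: assumes t0: "t \<ge> 0" and n1: "n \<ge> 1" shows "Mn n t \<le> Sn n"
proof -
  have "- (Sn n - Mn n t) \<le> (LINT s:{0..t}|lborel. (\<lambda>s. 0::real) s)"
  proof (rule GL[where h = "\<lambda>j s. - hj n j s" and \<psi> = "\<lambda>s. - \<psi> n s" and C = "Cb n"])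
    show "set_integrable lborel {0..t} (\<lambda>s. - hj n j s)" for j
      using hj_int[OF t0, of n j] by (simp add: set_integrable_def)
    show "AE s in lborel. s \<in> {0..t} \<longrightarrow> (\<lambda>j. - hj n j s) \<longlonglongrightarrow> - \<psi> n s"
      using AE_conv[OF t0 n1] by eventually_elim (auto intro: tendsto_minus)
    show "AE s in lborel. s \<in> {0..t} \<longrightarrow> \<bar>- hj n j s\<bar> \<le> Cb n" for j
      using AE_bnd[OF t0 n1, of j] by simp
    have "(\<lambda>j. - (LINT s:{0..t}|lborel. hj n j s)) \<longlonglongrightarrow> - (Sn n - Mn n t)"
      by (intro tendsto_minus lim_hj[OF t0])
    moreover have "(LINT s:{0..t}|lborel. - hj n j s) = - (LINT s:{0..t}|lborel. hj n j s)" for j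
      unfolding set_lebesgue_integral_def by simp
    ultimately show "(\<lambda>j. LINT s:{0..t}|lborel. - hj n j s) \<longlonglongrightarrow> - (Sn n - Mn n t)" by simp
    show "set_integrable lborel {0..t} (\<lambda>s. 0::real)" by (simp add: set_integrable_def)
    show "AE s in lborel. s \<in> {0..t} \<longrightarrow> - \<psi> n s \<le> 0"
      using psi_nonneg[OF _ n1] by auto
  qed
  then show ?thesis by (simp add: set_lebesgue_integral_def)
qed

lemma F_bound: assumes t0: "t \<ge> 0" and n1: "n \<ge> 1"
  and \<Psi>i: "set_integrable lborel {0..t} \<Psi>" and le: "\<And>s. 0 \<le> s \<Longrightarrow> s \<le> t \<Longrightarrow> \<psi> n s \<le> \<Psi> s"
  shows "Sn n - Mn n t \<le> (LINT s:{0..t}|lborel. \<Psi> s)"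
proof (rule GL[where h = "hj n" and \<psi> = "\<psi> n" and C = "Cb n"])
  show "set_integrable lborel {0..t} (hj n j)" for j by (rule hj_int[OF t0])
  show "AE s in lborel. s \<in> {0..t} \<longrightarrow> (\<lambda>j. hj n j s) \<longlonglongrightarrow> \<psi> n s" by (rule AE_conv[OF t0 n1])
  show "AE s in lborel. s \<in> {0..t} \<longrightarrow> \<bar>hj n j s\<bar> \<le> Cb n" for j by (rule AE_bnd[OF t0 n1])
  show "(\<lambda>j. LINT s:{0..t}|lborel. hj n j s) \<longlonglongrightarrow> Sn n - Mn n t" by (rule lim_hj[OF t0])
  show "set_integrable lborel {0..t} \<Psi>" by (rule \<Psi>i)
  show "AE s in lborel. s \<in> {0..t} \<longrightarrow> \<psi> n s \<le> \<Psi> s" using le by auto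
qed

lemma exp_int: fixes t c :: real assumes t0: "t \<ge> 0" and c: "c > 0"
  shows "set_integrable lborel {0..t} (\<lambda>s. c * exp (- c * s))"
    and "(LINT s:{0..t}|lborel. c * exp (- c * s)) \<le> 1"
proof -
  show "set_integrable lborel {0..t} (\<lambda>s. c * exp (- c * s))"
    by (rule borel_integrable_atLeastAtMost') (intro continuous_intros)
  have "(LINT s:{0..t}|lborel. c * exp (- c * s)) = (- exp (- c * t)) - (- exp (- c * 0))"
    unfolding set_lebesgue_integral_def
  proof (rule integral_FTC_atLeastAtMost[OF t0])
    fix s assume "0 \<le> s" "s \<le> t"
    have "((\<lambda>s. - exp (- c * s)) has_real_derivative - (exp (- c * s) * (- c * 1))) (at s within {0..t})"
      by (intro DERIV_minus DERIV_chain2[OF DERIV_exp] DERIV_cmult DERIV_ident)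
    then show "((\<lambda>s. - exp (- c * s)) has_vector_derivative c * exp (- c * s)) (at s within {0..t})"
      by (simp add: has_real_derivative_iff_has_vector_derivative[symmetric] algebra_simps)
  next
    show "continuous_on {0..t} (\<lambda>s. c * exp (- c * s))" by (intro continuous_intros)
  qed
  then show "(LINT s:{0..t}|lborel. c * exp (- c * s)) \<le> 1" by simp
qed

definition a :: "nat \<Rightarrow> real" where "a i = (1/2) ^ i * x i"

lemma a_nonneg: "i \<ge> 1 \<Longrightarrow> a i \<ge> 0"
  using adm_pos[OF adm, of i] by (auto simp: a_def)

lemma Sn_Suc: "Sn (Suc m) = Sn m + a (Suc m)"
  by (simp add: Sn_def a_def)

lemma Sn_1: "Sn 1 = a 1" by (simp add: Sn_def a_def)

lemma Mn_nonneg: "t \<ge> 0 \<Longrightarrow> Mn n t \<ge> 0"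
  unfolding Mn_def by (rule integral_nonneg_AE) (simp add: G_nonneg)

lemma G_Suc: "G (Suc m) v = G m v + v * indicator {v. nI x v = Suc m} v"
  by (auto simp: G_def Lr_def indicator_def)

lemma Mn_Suc: assumes t0: "t \<ge> 0" shows "Mn (Suc m) t = Mn m t + An (Suc m) t"
proof -
  have "Mn (Suc m) t = (\<integral>v. G m v + v * indicator {v. nI x v = Suc m} v \<partial>mu t)"
    unfolding Mn_def by (rule Bochner_Integration.integral_cong) (simp_all add: G_Suc)
  also have "\<dots> = Mn m t + An (Suc m) t"
    unfolding Mn_def An_def by (rule Bochner_Integration.integral_add[OF G_int[OF t0] vc_int[OF t0]]) simp
  finally show ?thesis .
qed

lemma key_bound:
  assumes t0: "t \<ge> 0" and k1: "k \<ge> 1"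
    and hyp: "\<And>s. 0 \<le> s \<Longrightarrow> s \<le> t \<Longrightarrow> Sn (2*k-1) - Mn (2*k-1) s \<le> \<beta>"
  shows "Sn (2*k) - Mn (2*k) t \<le> (a (2*k) + \<beta>) / 2"
proof -
  define Cc where "Cc = a (2*k) + \<beta>"
  have eq2k: "2*k = Suc (2*k-1)" using k1 by simp
  have An_le: "An (2*k) s \<le> Cc" if s: "0 \<le> s" "s \<le> t" for s
  proof -
    have "An (2*k) s = Mn (2*k) s - Mn (2*k-1) s" using Mn_Suc[OF s(1), of "2*k-1"] eq2k by simp
    also have "\<dots> \<le> Sn (2*k) - Mn (2*k-1) s" using F_nonneg[OF s(1), of "2*k"] k1 by simp
    also have "Sn (2*k) = Sn (2*k-1) + a (2*k)" using Sn_Suc[of "2*k-1"] eq2k by simp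
    finally show ?thesis using hyp[OF s] unfolding Cc_def by simp
  qed
  have Cc0: "Cc \<ge> 0" using An_le[of 0] An_nonneg[of 0 "2*k"] t0 by simp
  define c :: real where "c = 16 ^ k"
  have c0: "c > 0" by (simp add: c_def)
  define \<Psi> where "\<Psi> s = Cc / 2 * (c * exp (- c * s))" for s
  have le: "\<psi> (2*k) s \<le> \<Psi> s" if s: "0 \<le> s" "s \<le> t" for s
  proof -
    have mp: "mplus (2*k+1) s \<le> (1/2) ^ (2*k+1) * exp (- (16 ^ k) * s)" by (rule mplus_odd[OF s(1)])
    have "\<psi> (2*k) s = 8 ^ (2*k) * An (2*k) s * mplus (2*k+1) s" by (simp add: \<psi>_def)
    also have "\<dots> \<le> 8 ^ (2*k) * Cc * ((1/2) ^ (2*k+1) * exp (- (16 ^ k) * s))"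
      using An_le[OF s] An_nonneg[OF s(1), of "2*k"] mp mplus_nonneg[of "2*k+1" s] s Cc0
      by (intro mult_mono mult_left_mono) auto
    also have "\<dots> = Cc * ((8::real) ^ (2*k) * (1/2) ^ (2*k+1)) * exp (- (16 ^ k) * s)" by (simp add: algebra_simps)
    also have "\<dots> = \<Psi> s" unfolding ar2 \<Psi>_def c_def by (simp add: algebra_simps)
    finally show ?thesis .
  qed
  have \<Psi>i: "set_integrable lborel {0..t} \<Psi>"
    unfolding \<Psi>_def using exp_int(1)[OF t0 c0] by (intro set_integrable_mult_right) auto
  have "Sn (2*k) - Mn (2*k) t \<le> (LINT s:{0..t}|lborel. \<Psi> s)"
    by (rule F_bound[OF t0 _ \<Psi>i le]) (use k1 in auto)
  also have "\<dots> = Cc / 2 * (LINT s:{0..t}|lborel. c * exp (- c * s))"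
    unfolding \<Psi>_def by (rule set_integral_mult_right)
  also have "\<dots> \<le> Cc / 2 * 1" using exp_int(2)[OF t0 c0] Cc0 by (intro mult_left_mono) auto
  finally show ?thesis unfolding Cc_def by simp
qed

end


context hyps begin

lemma a_summable: "summable a"
proof -
  have "(\<lambda>n. a (Suc n)) = (\<lambda>n. x (Suc n) * (1/2) ^ Suc n)" by (auto simp: a_def fun_eq_iff)
  then have "summable (\<lambda>n. a (Suc n))" using finite_mass by simp
  then show ?thesis by (subst summable_Suc_iff[symmetric])
qed

lemma Sn_sum: "Sn n = (\<Sum>i<n. a (Suc i))"
  by (induction n) (simp_all add: Sn_Suc, simp add: Sn_def)

lemma Sn_lim: "(\<lambda>k. Sn (2*k+2)) \<longlonglongrightarrow> M0"
proof -
  have s0: "(\<lambda>n. \<Sum>i<n. x (Suc i) * (1/2) ^ Suc i) \<longlonglongrightarrow> M0"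
    unfolding M0_def by (rule summable_LIMSEQ[OF finite_mass])
  have eq: "(\<lambda>n. \<Sum>i<n. a (Suc i)) = (\<lambda>n. \<Sum>i<n. x (Suc i) * (1/2) ^ Suc i)"
    by (intro ext sum.cong refl) (simp add: a_def mult.commute)
  have s: "(\<lambda>n. \<Sum>i<n. a (Suc i)) \<longlonglongrightarrow> M0" unfolding eq by (rule s0)
  have "strict_mono (\<lambda>k::nat. 2*k+2)" by (rule strict_monoI) simp
  from LIMSEQ_subseq_LIMSEQ[OF s this] show ?thesis by (simp add: Sn_sum o_def)
qed

lemma Mn_le_mass: assumes t0: "t \<ge> 0" shows "ennreal (Mn n t) \<le> (\<integral>\<^sup>+ v. ennreal v \<partial>mu t)"
proof -
  have "ennreal (Mn n t) = (\<integral>\<^sup>+ v. ennreal (G n v) \<partial>mu t)"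
    unfolding Mn_def by (rule nn_integral_eq_integral[OF G_int[OF t0], symmetric]) (simp add: G_nonneg)
  also have "\<dots> \<le> (\<integral>\<^sup>+ v. ennreal v \<partial>mu t)"
  proof (rule nn_integral_mono)
    fix v
    show "ennreal (G n v) \<le> ennreal v"
    proof (cases "v \<ge> 0")
      case True then show ?thesis using G_le[of n v] by (intro ennreal_leI) simp
    next
      case False then have "G n v = 0" using G_le[of n v] G_nonneg[of n v] by simp
      then show ?thesis by simp
    qed
  qed
  finally show ?thesis .
qed

lemma final: assumes t0: "t \<ge> 0" shows "(\<integral>\<^sup>+ v. ennreal v \<partial>mu t) = ennreal M0"
proof (rule antisym[OF W1[OF t0]])
  define \<beta> :: "nat \<Rightarrow> real" where "\<beta> = rec_nat 0 (\<lambda>k b. (a (2*k+2) + a (2*k+1) + b) / 2)"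
  have \<beta>0: "\<beta> 0 = 0" by (simp add: \<beta>_def)
  have \<beta>S: "\<beta> (Suc k) = (a (2*k+2) + a (2*k+1) + \<beta> k) / 2" for k by (simp add: \<beta>_def)
  have \<beta>nn: "\<beta> k \<ge> 0" for k
    by (induction k) (auto simp: \<beta>0 \<beta>S intro!: add_nonneg_nonneg a_nonneg)
  have claim: "(\<forall>s. 0 \<le> s \<longrightarrow> s \<le> t \<longrightarrow> Sn (2*k+1) - Mn (2*k+1) s \<le> a (2*k+1) + \<beta> k) \<and>
               (\<forall>s. 0 \<le> s \<longrightarrow> s \<le> t \<longrightarrow> Sn (2*k+2) - Mn (2*k+2) s \<le> \<beta> (Suc k))" for k
  proof (induction k)
    case 0
    have odd0: "\<forall>s. 0 \<le> s \<longrightarrow> s \<le> t \<longrightarrow> Sn (2*0+1) - Mn (2*0+1) s \<le> a (2*0+1) + \<beta> 0"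
    proof (intro allI impI)
      fix s :: real assume s: "0 \<le> s" "s \<le> t"
      have "Mn 1 s \<ge> 0" by (rule Mn_nonneg[OF s(1)])
      moreover have "(2*0+1::nat) = 1" by simp
      ultimately show "Sn (2*0+1) - Mn (2*0+1) s \<le> a (2*0+1) + \<beta> 0"
        using Sn_1 \<beta>0 by (simp only:)
    qed
    have "\<forall>s. 0 \<le> s \<longrightarrow> s \<le> t \<longrightarrow> Sn (2*0+2) - Mn (2*0+2) s \<le> \<beta> (Suc 0)"
    proof (intro allI impI)
      fix s :: real assume s: "0 \<le> s" "s \<le> t"
      have "Sn (2*1) - Mn (2*1) s \<le> (a (2*1) + (a (2*0+1) + \<beta> 0)) / 2"
        by (rule key_bound[OF s(1)]) (use odd0 s in auto)
      then show "Sn (2*0+2) - Mn (2*0+2) s \<le> \<beta> (Suc 0)" by (simp add: \<beta>S \<beta>0 numeral_2_eq_2)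
    qed
    with odd0 show ?case by blast
  next
    case (Suc k)
    have oddS: "\<forall>s. 0 \<le> s \<longrightarrow> s \<le> t \<longrightarrow> Sn (2*Suc k+1) - Mn (2*Suc k+1) s \<le> a (2*Suc k+1) + \<beta> (Suc k)"
    proof (intro allI impI)
      fix s :: real assume s: "0 \<le> s" "s \<le> t"
      have e1: "2*Suc k+1 = Suc (2*k+2)" by simp
      have "Sn (2*Suc k+1) - Mn (2*Suc k+1) s = a (2*Suc k+1) + (Sn (2*k+2) - Mn (2*k+2) s) - An (2*Suc k+1) s"
        unfolding e1 Sn_Suc Mn_Suc[OF s(1)] by simp
      also have "\<dots> \<le> a (2*Suc k+1) + \<beta> (Suc k)"
        using Suc.IH s An_nonneg[OF s(1), of "2*Suc k+1"] by auto
      finally show "Sn (2*Suc k+1) - Mn (2*Suc k+1) s \<le> a (2*Suc k+1) + \<beta> (Suc k)" .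
    qed
    have "\<forall>s. 0 \<le> s \<longrightarrow> s \<le> t \<longrightarrow> Sn (2*Suc k+2) - Mn (2*Suc k+2) s \<le> \<beta> (Suc (Suc k))"
    proof (intro allI impI)
      fix s :: real assume s: "0 \<le> s" "s \<le> t"
      have e2: "2 * (Suc k + 1) - 1 = 2*Suc k+1" "2 * (Suc k + 1) = 2*Suc k+2" by simp_all
      have "Sn (2*(Suc k+1)) - Mn (2*(Suc k+1)) s \<le> (a (2*(Suc k+1)) + (a (2*Suc k+1) + \<beta> (Suc k))) / 2"
        by (rule key_bound[OF s(1)]) (use oddS s in \<open>auto simp: e2\<close>)
      then show "Sn (2*Suc k+2) - Mn (2*Suc k+2) s \<le> \<beta> (Suc (Suc k))"
        unfolding e2 \<beta>S[of "Suc k"] by (simp add: algebra_simps)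
    qed
    with oddS show ?case by blast
  qed
  have a0: "a \<longlonglongrightarrow> 0" by (rule summable_LIMSEQ_zero[OF a_summable])
  have "(\<lambda>k. a (2*k+2)) \<longlonglongrightarrow> 0"
  proof -
    have "strict_mono (\<lambda>k::nat. 2*k+2)" by (rule strict_monoI) simp
    from LIMSEQ_subseq_LIMSEQ[OF a0 this] show ?thesis by (simp add: o_def)
  qed
  moreover have "(\<lambda>k. a (2*k+1)) \<longlonglongrightarrow> 0"
  proof -
    have "strict_mono (\<lambda>k::nat. 2*k+1)" by (rule strict_monoI) simp
    from LIMSEQ_subseq_LIMSEQ[OF a0 this] show ?thesis by (simp add: o_def)
  qed
  ultimately have e0: "(\<lambda>k. a (2*k+2) + a (2*k+1)) \<longlonglongrightarrow> 0" using tendsto_add by fastforce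
  have \<beta>lim: "\<beta> \<longlonglongrightarrow> 0"
    by (rule beta_to_zero[OF _ \<beta>nn e0]) (simp add: \<beta>S)
  have \<beta>lim': "(\<lambda>k. \<beta> (Suc k)) \<longlonglongrightarrow> 0" using \<beta>lim by (rule LIMSEQ_Suc)
  have "(\<lambda>k. ennreal (Sn (2*k+2) - \<beta> (Suc k))) \<longlonglongrightarrow> ennreal (M0 - 0)"
    by (intro tendsto_ennrealI tendsto_diff Sn_lim \<beta>lim')
  then have lim: "(\<lambda>k. ennreal (Sn (2*k+2) - \<beta> (Suc k))) \<longlonglongrightarrow> ennreal M0" by simp
  have bnd: "\<exists>N. \<forall>k\<ge>N. ennreal (Sn (2*k+2) - \<beta> (Suc k)) \<le> (\<integral>\<^sup>+ v. ennreal v \<partial>mu t)"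
  proof (intro exI allI impI)
    fix k :: nat
    have "Sn (2*k+2) - \<beta> (Suc k) \<le> Mn (2*k+2) t" using claim[of k] t0 by auto
    then have "ennreal (Sn (2*k+2) - \<beta> (Suc k)) \<le> ennreal (Mn (2*k+2) t)" by (rule ennreal_leI)
    also have "\<dots> \<le> (\<integral>\<^sup>+ v. ennreal v \<partial>mu t)" by (rule Mn_le_mass[OF t0])
    finally show "ennreal (Sn (2*k+2) - \<beta> (Suc k)) \<le> (\<integral>\<^sup>+ v. ennreal v \<partial>mu t)" .
  qed
  show "ennreal M0 \<le> (\<integral>\<^sup>+ v. ennreal v \<partial>mu t)" by (rule LIMSEQ_le_const2[OF lim bnd])
qed

end

theorem proposition3p2:
  fixes x :: "nat \<Rightarrow> real"
    and mM :: "nat \<Rightarrow> nat \<Rightarrow> real \<Rightarrow> real"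
    and mplus :: "nat \<Rightarrow> real \<Rightarrow> real"
    and mu :: "real \<Rightarrow> real measure"
  assumes adm: "admissible_seq x"
    and mM_sol: "\<forall>M\<ge>1. ode_sol (mM M) \<and>
                   (\<forall>n\<ge>1. mM M n 0 = (if n \<le> M then (1/2) ^ n else 0))"
    and mplus_lim: "\<forall>n\<ge>1. \<forall>t\<ge>0. (\<lambda>N. mM (2 * N) n t) \<longlonglongrightarrow> mplus n t"
    and finite_mass: "summable (\<lambda>n. x (Suc n) * (1/2) ^ Suc n)"
    and sol: "smol_solution x mu"
    and supp: "\<forall>t\<ge>0. emeasure (mu t) (- Iset x) = 0"
    and levels: "\<forall>n\<ge>1. \<forall>t\<ge>0. emeasure (mu t) {v. nI x v = n} = ennreal (mplus n t)"
  shows "\<forall>t\<ge>0. (\<integral>\<^sup>+ v. ennreal v \<partial>mu t) = (\<integral>\<^sup>+ v. ennreal v \<partial>mu0 x)"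
proof -
  interpret hyps x mM mplus mu
    by (intro hyps.intro adm mM_sol mplus_lim finite_mass sol levels)
  show ?thesis using final mu0_nn by simp
qed

end
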